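(* Let $\alpha>0$ and let $\varphi\ge0$ be a measurable function on $\mathbb{C}$ satisfying condition $(I_1)$. Then $T_\varphi$ is compact on $F^\infty_\alpha$ if and only if $\tilde{\varphi}_t\in C_0(\mathbb{C})$ for every $t>0$.
   Context: $d\lambda_\alpha(w)=\frac{\alpha}{\pi}e^{-\alpha|w|^2}dA(w)$, $K_z(w)=e^{\alpha\bar z w}$. $\varphi$ satisfies condition $(I_1)$ if $\int_{\mathbb{C}}|\varphi(w)||K_z(w)|^2\,d\lambda_\alpha(w)<\infty$ for all $z$. $F^\infty_\alpha$ is the space of entire $f$ with $\|f\|_{\infty,\alpha}=\sup_z|f(z)|e^{-\alpha|z|^2/2}<\infty$. $T_\varphi f(z)=\int_{\mathbb{C}}\varphi(w)f(w)\overline{K_z(w)}\,d\lambda_\alpha(w)$. $\tilde{\varphi}_t(z)=\frac{\alpha}{\pi}\int_{\mathbb{C}}\varphi(w)e^{-\alpha t|z-w|^2/2}\,dA(w)$. $C_0(\mathbb{C})$ is the space of continuous functions vanishing at infinity. *)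

theory Defs
  imports "HOL-Analysis.Analysis"
begin

(* Fock weight: the Gaussian measure d lambda_alpha = (alpha/pi) e^{-alpha |w|^2} dA(w),
   written as a density against Lebesgue measure dA on C. *)
definition gauss_dens :: "real \<Rightarrow> complex \<Rightarrow> real" where
  "gauss_dens \<alpha> w = (\<alpha> / pi) * exp (- \<alpha> * (cmod w)\<^sup>2)"

definition fock_kernel :: "real \<Rightarrow> complex \<Rightarrow> complex \<Rightarrow> complex" where
  "fock_kernel \<alpha> z w = exp (complex_of_real \<alpha> * cnj z * w)"

definition cond_I1 :: "real \<Rightarrow> (complex \<Rightarrow> real) \<Rightarrow> bool" where
  "cond_I1 \<alpha> \<phi> \<longleftrightarrow> (\<forall>z. integrable lebesgue
      (\<lambda>w. \<bar>\<phi> w\<bar> * (cmod (fock_kernel \<alpha> z w))\<^sup>2 * gauss_dens \<alpha> w))"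

definition fock_inf :: "real \<Rightarrow> (complex \<Rightarrow> complex) set" where
  "fock_inf \<alpha> = {f. f holomorphic_on UNIV \<and>
      bdd_above (range (\<lambda>z. cmod (f z) * exp (- \<alpha> * (cmod z)\<^sup>2 / 2)))}"

definition fock_inf_norm :: "real \<Rightarrow> (complex \<Rightarrow> complex) \<Rightarrow> real" where
  "fock_inf_norm \<alpha> f = (SUP z. cmod (f z) * exp (- \<alpha> * (cmod z)\<^sup>2 / 2))"

definition toeplitz :: "real \<Rightarrow> (complex \<Rightarrow> real) \<Rightarrow> (complex \<Rightarrow> complex) \<Rightarrow> complex \<Rightarrow> complex" where
  "toeplitz \<alpha> \<phi> f z = integral\<^sup>L lebesgue
      (\<lambda>w. complex_of_real (\<phi> w * gauss_dens \<alpha> w) * f w * cnj (fock_kernel \<alpha> z w))"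

definition compact_on_fock_inf :: "real \<Rightarrow> ((complex \<Rightarrow> complex) \<Rightarrow> (complex \<Rightarrow> complex)) \<Rightarrow> bool" where
  "compact_on_fock_inf \<alpha> T \<longleftrightarrow>
     (\<forall>f \<in> fock_inf \<alpha>. T f \<in> fock_inf \<alpha>) \<and>
     (\<forall>fs :: nat \<Rightarrow> complex \<Rightarrow> complex. (\<forall>n. fs n \<in> fock_inf \<alpha>) \<longrightarrow>
        bdd_above (range (\<lambda>n. fock_inf_norm \<alpha> (fs n))) \<longrightarrow>
        (\<exists>r g. strict_mono r \<and> g \<in> fock_inf \<alpha> \<and>
           (\<lambda>n. fock_inf_norm \<alpha> (\<lambda>z. T (fs (r n)) z - g z)) \<longlonglongrightarrow> 0))"

(* heat transform, as an extended nonnegative value (phi >= 0; it may a priori be infinite) *)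
definition heat_transform :: "real \<Rightarrow> (complex \<Rightarrow> real) \<Rightarrow> real \<Rightarrow> complex \<Rightarrow> ennreal" where
  "heat_transform \<alpha> \<phi> t z = (\<integral>\<^sup>+ w. ennreal ((\<alpha> / pi) * \<phi> w * exp (- \<alpha> * t * (cmod (z - w))\<^sup>2 / 2)) \<partial>lebesgue)"

definition in_C0 :: "(complex \<Rightarrow> ennreal) \<Rightarrow> bool" where
  "in_C0 F \<longleftrightarrow> (\<forall>z. F z < \<infinity>) \<and> continuous_on UNIV (\<lambda>z. enn2real (F z)) \<and>
      ((\<lambda>z. enn2real (F z)) \<longlongrightarrow> 0) at_infinity"

end

theory Submission
  imports Defs "HOL-Complex_Analysis.Complex_Analysis" "HOL-Probability.Distributions"
begin

lemma E1: fixes c w :: complex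
  shows "-\<alpha>*(cmod w)^2 + 2*\<alpha>*Re(cnj c * w) = -\<alpha>*(cmod (w - c))^2 + \<alpha>*(cmod c)^2"
  unfolding cmod_power2 by (simp add: power2_eq_square algebra_simps)

lemma E1h: fixes c w :: complex
  shows "-\<alpha>*(cmod w)^2/2 + \<alpha>*Re(cnj c * w) = -\<alpha>*(cmod (w - c))^2/2 + \<alpha>*(cmod c)^2/2"
  using E1[of \<alpha> w c] by (simp add: field_simps)

lemma kern_norm: "cmod (fock_kernel \<alpha> z w) = exp (\<alpha> * Re (cnj z * w))"
  by (simp add: fock_kernel_def norm_exp_eq_Re algebra_simps)

lemma kern_cnj: "cnj (fock_kernel \<alpha> z w) = exp (complex_of_real \<alpha> * z * cnj w)"
  by (simp add: fock_kernel_def exp_cnj)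

lemma cont_meas: "continuous_on UNIV (f::complex \<Rightarrow> 'b::{banach,second_countable_topology}) \<Longrightarrow> f \<in> borel_measurable lebesgue"
  by (intro measurable_completion) (simp add: borel_measurable_continuous_onI)

lemma fock_le_norm:
  assumes "f \<in> fock_inf \<alpha>"
  shows "cmod (f z) * exp (- \<alpha> * (cmod z)\<^sup>2 / 2) \<le> fock_inf_norm \<alpha> f"
  using assms unfolding fock_inf_def fock_inf_norm_def by (auto intro: cSUP_upper)

lemma fock_le_norm':
  assumes "f \<in> fock_inf \<alpha>"
  shows "cmod (f z) \<le> fock_inf_norm \<alpha> f * exp (\<alpha> * (cmod z)\<^sup>2 / 2)"
proof -
  have "cmod (f z) = cmod (f z) * exp (- \<alpha> * (cmod z)\<^sup>2 / 2) * exp (\<alpha> * (cmod z)\<^sup>2 / 2)"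
    by (simp add: mult.assoc exp_add[symmetric])
  also have "\<dots> \<le> fock_inf_norm \<alpha> f * exp (\<alpha> * (cmod z)\<^sup>2 / 2)"
    by (rule mult_right_mono[OF fock_le_norm[OF assms]]) simp
  finally show ?thesis .
qed

lemma fock_norm_le:
  assumes "\<And>z. cmod (f z) * exp (- \<alpha> * (cmod z)\<^sup>2 / 2) \<le> B"
  shows "fock_inf_norm \<alpha> f \<le> B"
  unfolding fock_inf_norm_def by (rule cSUP_least) (use assms in auto)

lemma fock_norm_nonneg:
  assumes "f \<in> fock_inf \<alpha>"
  shows "0 \<le> fock_inf_norm \<alpha> f"
  by (rule order_trans[OF _ fock_le_norm[OF assms, of 0]]) simp

lemma fock_infI:
  assumes "f holomorphic_on UNIV" "\<And>z. cmod (f z) * exp (- \<alpha> * (cmod z)\<^sup>2 / 2) \<le> B"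
  shows "f \<in> fock_inf \<alpha>"
  using assms unfolding fock_inf_def by (auto intro!: bdd_aboveI2)

lemma fock_diff:
  assumes "f \<in> fock_inf \<alpha>" "g \<in> fock_inf \<alpha>"
  shows "(\<lambda>z. f z - g z) \<in> fock_inf \<alpha>"
proof (rule fock_infI)
  show "(\<lambda>z. f z - g z) holomorphic_on UNIV"
    using assms unfolding fock_inf_def by (auto intro!: holomorphic_intros)
  fix z
  have "cmod (f z - g z) * exp (- \<alpha> * (cmod z)\<^sup>2 / 2) \<le>
        (cmod (f z) + cmod (g z)) * exp (- \<alpha> * (cmod z)\<^sup>2 / 2)"
    by (rule mult_right_mono) (auto simp: norm_triangle_ineq4)
  also have "\<dots> \<le> fock_inf_norm \<alpha> f + fock_inf_norm \<alpha> g"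
    using fock_le_norm[OF assms(1), of z] fock_le_norm[OF assms(2), of z] by (simp add: algebra_simps)
  finally show "cmod (f z - g z) * exp (- \<alpha> * (cmod z)\<^sup>2 / 2) \<le> fock_inf_norm \<alpha> f + fock_inf_norm \<alpha> g" .
qed

lemma fock_norm_tri:
  assumes "f \<in> fock_inf \<alpha>" "g \<in> fock_inf \<alpha>"
  shows "fock_inf_norm \<alpha> f \<le> fock_inf_norm \<alpha> (\<lambda>z. f z - g z) + fock_inf_norm \<alpha> g"
proof (rule fock_norm_le)
  fix z
  have "cmod (f z) * exp (- \<alpha> * (cmod z)\<^sup>2 / 2) \<le>
        (cmod (f z - g z) + cmod (g z)) * exp (- \<alpha> * (cmod z)\<^sup>2 / 2)"
    by (rule mult_right_mono) (use norm_triangle_ineq[of "f z - g z" "g z"] in auto)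
  also have "\<dots> \<le> fock_inf_norm \<alpha> (\<lambda>z. f z - g z) + fock_inf_norm \<alpha> g"
    using fock_le_norm[OF fock_diff[OF assms], of z] fock_le_norm[OF assms(2), of z]
    by (simp add: algebra_simps)
  finally show "cmod (f z) * exp (- \<alpha> * (cmod z)\<^sup>2 / 2) \<le> fock_inf_norm \<alpha> (\<lambda>z. f z - g z) + fock_inf_norm \<alpha> g" .
qed

locale fock =
  fixes \<alpha> :: real and \<phi> :: "complex \<Rightarrow> real"
  assumes apos: "\<alpha> > 0"
    and meas[measurable]: "\<phi> \<in> borel_measurable lebesgue"
    and nonneg: "\<And>w. \<phi> w \<ge> 0"
    and I1: "cond_I1 \<alpha> \<phi>"
begin

abbreviation "N \<equiv> heat_transform \<alpha> \<phi>"
abbreviation "T \<equiv> toeplitz \<alpha> \<phi>"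

definition J :: "complex \<Rightarrow> real" where
  "J c = (\<integral>w. \<phi> w * exp (-\<alpha>*(cmod (w - c))^2) \<partial>lebesgue)"

definition F :: "complex \<Rightarrow> real" where
  "F c = (\<alpha>/pi) * J c"

lemma gauss_kern: "(cmod (fock_kernel \<alpha> c w))\<^sup>2 * gauss_dens \<alpha> w
   = (\<alpha>/pi) * exp (\<alpha>*(cmod c)^2) * exp (-\<alpha>*(cmod (w - c))^2)"
proof -
  have "(cmod (fock_kernel \<alpha> c w))\<^sup>2 * gauss_dens \<alpha> w
      = (\<alpha>/pi) * exp (-\<alpha>*(cmod w)^2 + 2*\<alpha>*Re(cnj c * w))"
    by (simp add: kern_norm gauss_dens_def power2_eq_square exp_add[symmetric] algebra_simps)
  also have "\<dots> = (\<alpha>/pi) * exp (\<alpha>*(cmod c)^2) * exp (-\<alpha>*(cmod (w - c))^2)"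
    unfolding E1 by (simp add: exp_add[symmetric] algebra_simps)
  finally show ?thesis .
qed

lemma I1_int: "integrable lebesgue (\<lambda>w. \<phi> w * exp (-\<alpha>*(cmod (w - c))^2))"
proof -
  have "integrable lebesgue (\<lambda>w. \<bar>\<phi> w\<bar> * (cmod (fock_kernel \<alpha> c w))\<^sup>2 * gauss_dens \<alpha> w)"
    using I1 unfolding cond_I1_def by blast
  then have "integrable lebesgue (\<lambda>w. (pi/\<alpha>) * exp (-\<alpha>*(cmod c)^2) *
      (\<bar>\<phi> w\<bar> * (cmod (fock_kernel \<alpha> c w))\<^sup>2 * gauss_dens \<alpha> w))"
    by (rule integrable_mult_right)
  moreover have "(pi/\<alpha>) * exp (-\<alpha>*(cmod c)^2) *
      (\<bar>\<phi> w\<bar> * (cmod (fock_kernel \<alpha> c w))\<^sup>2 * gauss_dens \<alpha> w) = \<phi> w * exp (-\<alpha>*(cmod (w - c))^2)" for w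
  proof -
    have "(pi/\<alpha>) * exp (-\<alpha>*(cmod c)^2) *
      (\<bar>\<phi> w\<bar> * (cmod (fock_kernel \<alpha> c w))\<^sup>2 * gauss_dens \<alpha> w)
      = (pi/\<alpha>) * (\<alpha>/pi) * (exp (-\<alpha>*(cmod c)^2) * exp (\<alpha>*(cmod c)^2)) * (\<phi> w * exp (-\<alpha>*(cmod (w - c))^2))"
      using nonneg[of w] by (simp add: mult.assoc gauss_kern)
    also have "\<dots> = \<phi> w * exp (-\<alpha>*(cmod (w - c))^2)"
      using apos by (simp add: exp_add[symmetric])
    finally show ?thesis .
  qed
  ultimately show ?thesis by simp
qed

lemma J_nonneg: "J c \<ge> 0"
  unfolding J_def by (rule integral_nonneg_AE) (simp add: nonneg)

lemma F_nonneg: "F c \<ge> 0"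
  unfolding F_def using J_nonneg apos by simp

lemma N2_eq: "N 2 c = ennreal (F c)"
proof -
  have "N 2 c = (\<integral>\<^sup>+ w. ennreal ((\<alpha>/pi) * (\<phi> w * exp (-\<alpha>*(cmod (w - c))^2))) \<partial>lebesgue)"
    unfolding heat_transform_def by (intro nn_integral_cong) (simp add: norm_minus_commute algebra_simps)
  also have "\<dots> = ennreal (\<integral>w. (\<alpha>/pi) * (\<phi> w * exp (-\<alpha>*(cmod (w - c))^2)) \<partial>lebesgue)"
    by (rule nn_integral_eq_integral[OF integrable_mult_right[OF I1_int]]) (use apos nonneg in auto)
  also have "\<dots> = ennreal (F c)"
    unfolding F_def J_def by simp
  finally show ?thesis .
qed

definition kn :: "complex \<Rightarrow> complex \<Rightarrow> complex" where
  "kn a = (\<lambda>z. fock_kernel \<alpha> a z * complex_of_real (exp (-\<alpha>*(cmod a)^2/2)))"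

lemma kn_bound: "cmod (kn a z) * exp (- \<alpha> * (cmod z)\<^sup>2 / 2) = exp (-\<alpha>*(cmod (z - a))^2/2)"
proof -
  have "cmod (kn a z) * exp (- \<alpha> * (cmod z)\<^sup>2 / 2)
     = exp (-\<alpha>*(cmod z)^2/2 + \<alpha>*Re(cnj a * z) - \<alpha>*(cmod a)^2/2)"
    by (simp add: kn_def kern_norm norm_mult exp_add[symmetric] exp_diff algebra_simps)
  also have "\<dots> = exp (-\<alpha>*(cmod (z - a))^2/2)"
    using E1h[of \<alpha> z a] by (simp add: algebra_simps)
  finally show ?thesis .
qed

lemma kn_fock: "kn a \<in> fock_inf \<alpha>" and kn_norm: "fock_inf_norm \<alpha> (kn a) \<le> 1"
proof -
  have b: "cmod (kn a z) * exp (- \<alpha> * (cmod z)\<^sup>2 / 2) \<le> 1" for z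
    unfolding kn_bound using apos by simp
  show "kn a \<in> fock_inf \<alpha>"
    by (rule fock_infI[OF _ b]) (simp add: kn_def fock_kernel_def holomorphic_intros)
  show "fock_inf_norm \<alpha> (kn a) \<le> 1"
    by (rule fock_norm_le[OF b])
qed

lemma T_kn_diag: "cmod (T (kn a) a) * exp (-\<alpha>*(cmod a)^2/2) = F a"
proof -
  have "T (kn a) a = (\<integral>w. complex_of_real ((\<alpha>/pi) * exp (\<alpha>*(cmod a)^2/2) *
            (\<phi> w * exp (-\<alpha>*(cmod (w - a))^2))) \<partial>lebesgue)"
    unfolding toeplitz_def
  proof (rule Bochner_Integration.integral_cong[OF refl])
    fix w
    have kk: "fock_kernel \<alpha> a w * cnj (fock_kernel \<alpha> a w) = complex_of_real ((cmod (fock_kernel \<alpha> a w))\<^sup>2)"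
      using complex_norm_square[of "fock_kernel \<alpha> a w"] by simp
    have "complex_of_real (\<phi> w * gauss_dens \<alpha> w) * kn a w * cnj (fock_kernel \<alpha> a w)
        = complex_of_real (\<phi> w * exp (-\<alpha>*(cmod a)^2/2) * ((cmod (fock_kernel \<alpha> a w))\<^sup>2 * gauss_dens \<alpha> w))"
      unfolding kn_def using kk by (simp add: algebra_simps)
    also have "\<dots> = complex_of_real ((\<alpha>/pi) * exp (\<alpha>*(cmod a)^2/2) *
            (\<phi> w * exp (-\<alpha>*(cmod (w - a))^2)))"
      unfolding gauss_kern by (simp add: algebra_simps exp_add[symmetric])
    finally show "complex_of_real (\<phi> w * gauss_dens \<alpha> w) * kn a w * cnj (fock_kernel \<alpha> a w) = \<dots>" .
  qed
  also have "\<dots> = complex_of_real ((\<alpha>/pi) * exp (\<alpha>*(cmod a)^2/2) * J a)"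
    unfolding J_def by (subst integral_complex_of_real) (simp only: integral_mult_right_zero)
  finally have e: "T (kn a) a = complex_of_real ((\<alpha>/pi) * exp (\<alpha>*(cmod a)^2/2) * J a)" .
  have "cmod (T (kn a) a) = \<bar>(\<alpha>/pi) * exp (\<alpha>*(cmod a)^2/2) * J a\<bar>"
    by (simp only: e norm_of_real)
  also have "\<dots> = (\<alpha>/pi) * exp (\<alpha>*(cmod a)^2/2) * J a"
    using J_nonneg[of a] apos by (intro abs_of_nonneg) simp
  finally have "cmod (T (kn a) a) = (\<alpha>/pi) * exp (\<alpha>*(cmod a)^2/2) * J a" .
  moreover have "exp (\<alpha>*(cmod a)^2/2) * exp (-\<alpha>*(cmod a)^2/2) = 1"
    by (simp add: exp_add[symmetric])
  ultimately show ?thesis unfolding F_def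
    by (simp add: mult_ac)
qed

end

lemma compactD:
  fixes fs :: "nat \<Rightarrow> complex \<Rightarrow> complex"
  assumes "compact_on_fock_inf \<alpha> S" "\<forall>n. fs n \<in> fock_inf \<alpha>" "bdd_above (range (\<lambda>n. fock_inf_norm \<alpha> (fs n)))"
  obtains r :: "nat \<Rightarrow> nat" and g where "strict_mono r" "g \<in> fock_inf \<alpha>" "(\<lambda>n. fock_inf_norm \<alpha> (\<lambda>z. S (fs (r n)) z - g z)) \<longlonglongrightarrow> 0"
proof -
  have c2: "\<forall>fs :: nat \<Rightarrow> complex \<Rightarrow> complex. (\<forall>n. fs n \<in> fock_inf \<alpha>) \<longrightarrow> bdd_above (range (\<lambda>n. fock_inf_norm \<alpha> (fs n))) \<longrightarrow>
        (\<exists>r g. strict_mono r \<and> g \<in> fock_inf \<alpha> \<and>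
           (\<lambda>n. fock_inf_norm \<alpha> (\<lambda>z. S (fs (r n)) z - g z)) \<longlonglongrightarrow> 0)"
    using assms(1) unfolding compact_on_fock_inf_def by (rule conjunct2)
  have "\<exists>r g. strict_mono r \<and> g \<in> fock_inf \<alpha> \<and>
           (\<lambda>n. fock_inf_norm \<alpha> (\<lambda>z. S (fs (r n)) z - g z)) \<longlonglongrightarrow> 0"
    using spec[OF c2, of fs] assms(2,3) by blast
  then show thesis using that by blast
qed

lemma compactD1:
  assumes "compact_on_fock_inf \<alpha> S" "f \<in> fock_inf \<alpha>"
  shows "S f \<in> fock_inf \<alpha>"
  using assms unfolding compact_on_fock_inf_def by blast

context fock begin

lemma kn_norm_pt: "cmod (kn a w) = exp (\<alpha>*Re(cnj a * w) - \<alpha>*(cmod a)^2/2)"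
  unfolding kn_def norm_mult norm_of_real kern_norm abs_exp_cancel exp_add[symmetric] by simp

lemma T_kn_bound: "cmod (T (kn a) z) \<le> exp (-\<alpha>*(cmod a)^2/2 + \<alpha>*(cmod ((a+z)/2))^2) * F ((a+z)/2)"
proof -
  define c where "c = (a+z)/2"
  have pt: "norm (complex_of_real (\<phi> w * gauss_dens \<alpha> w) * kn a w * cnj (fock_kernel \<alpha> z w))
     = exp (-\<alpha>*(cmod a)^2/2 + \<alpha>*(cmod c)^2) * ((\<alpha>/pi) * (\<phi> w * exp (-\<alpha>*(cmod (w - c))^2)))" for w
  proof -
    have "norm (complex_of_real (\<phi> w * gauss_dens \<alpha> w) * kn a w * cnj (fock_kernel \<alpha> z w))
       = \<bar>\<phi> w * gauss_dens \<alpha> w\<bar> * cmod (kn a w) * cmod (fock_kernel \<alpha> z w)"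
      by (simp only: norm_mult norm_of_real complex_mod_cnj)
    also have "\<dots> = \<phi> w * (\<alpha>/pi) * (exp (-\<alpha>*(cmod w)^2) * exp (\<alpha>*Re(cnj a * w) - \<alpha>*(cmod a)^2/2) * exp (\<alpha>*Re(cnj z * w)))"
      using nonneg[of w] apos by (simp add: kn_norm_pt kern_norm gauss_dens_def abs_mult)
    also have "\<dots> = \<phi> w * (\<alpha>/pi) * exp (-\<alpha>*(cmod w)^2 + \<alpha>*Re(cnj a * w) + \<alpha>*Re(cnj z * w) - \<alpha>*(cmod a)^2/2)"
      by (simp only: exp_add[symmetric]) (simp add: algebra_simps)
    also have "-\<alpha>*(cmod w)^2 + \<alpha>*Re(cnj a * w) + \<alpha>*Re(cnj z * w) = -\<alpha>*(cmod w)^2 + 2*\<alpha>*Re(cnj c * w)"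
      by (simp add: c_def algebra_simps)
    also have "\<dots> = -\<alpha>*(cmod (w - c))^2 + \<alpha>*(cmod c)^2"
      by (rule E1)
    also have "-\<alpha>*(cmod (w - c))^2 + \<alpha>*(cmod c)^2 - \<alpha>*(cmod a)^2/2 = (-\<alpha>*(cmod a)^2/2 + \<alpha>*(cmod c)^2) + (-\<alpha>*(cmod (w - c))^2)"
      by simp
    finally show ?thesis by (simp only: exp_add) (simp only: mult_ac)
  qed
  have "cmod (T (kn a) z) \<le> (\<integral>w. norm (complex_of_real (\<phi> w * gauss_dens \<alpha> w) * kn a w * cnj (fock_kernel \<alpha> z w)) \<partial>lebesgue)"
    unfolding toeplitz_def by (rule integral_norm_bound)
  also have "\<dots> = (\<integral>w. exp (-\<alpha>*(cmod a)^2/2 + \<alpha>*(cmod c)^2) * ((\<alpha>/pi) * (\<phi> w * exp (-\<alpha>*(cmod (w - c))^2))) \<partial>lebesgue)"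
    by (simp only: pt)
  also have "\<dots> = exp (-\<alpha>*(cmod a)^2/2 + \<alpha>*(cmod c)^2) * F c"
    unfolding F_def J_def by (simp only: integral_mult_right_zero)
  finally show ?thesis unfolding c_def .
qed

lemma decay_exp: "exp (-\<alpha>*(cmod a)^2/2 + \<alpha>*(cmod ((a+z)/2))^2) \<le> exp (-\<alpha>*(cmod a)^2/8 + 3*\<alpha>*(cmod z)^2/4)"
proof -
  have c: "cmod ((a+z)/2) \<le> (cmod a + cmod z)/2"
    using norm_triangle_ineq[of a z] by (simp add: norm_divide)
  have "(cmod ((a+z)/2))^2 \<le> ((cmod a + cmod z)/2)^2"
    by (rule power_mono[OF c]) simp
  moreover have "0 \<le> (cmod a - 2*cmod z)^2" by simp
  ultimately have "(cmod ((a+z)/2))^2 - (cmod a)^2/2 \<le> 3*(cmod z)^2/4 - (cmod a)^2/8"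
    by (simp add: power2_eq_square algebra_simps)
  then have "\<alpha>*((cmod ((a+z)/2))^2 - (cmod a)^2/2) \<le> \<alpha>*(3*(cmod z)^2/4 - (cmod a)^2/8)"
    using apos by (intro mult_left_mono) auto
  then show ?thesis by (simp add: algebra_simps)
qed

lemma A_bdd:
  assumes C: "compact_on_fock_inf \<alpha> T"
  shows "\<exists>B. \<forall>a. F a \<le> B"
proof (rule ccontr)
  assume nb: "\<not> ?thesis"
  have "\<forall>n::nat. \<exists>a. F a > real n"
  proof
    fix n :: nat
    from nb have "\<not> (\<forall>a. F a \<le> real n)" by blast
    then show "\<exists>a. F a > real n" by (simp add: not_le)
  qed
  then obtain a where a: "\<And>n. F (a n) > real n" using choice[of "\<lambda>n a. F a > real n"] by blast
  define fs where "fs = (\<lambda>n. kn (a n))"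
  have fs: "\<forall>n. fs n \<in> fock_inf \<alpha>" unfolding fs_def by (simp add: kn_fock)
  have "bdd_above (range (\<lambda>n. fock_inf_norm \<alpha> (fs n)))"
    unfolding fs_def by (rule bdd_aboveI2[where M=1]) (simp add: kn_norm)
  with C fs obtain r g where r: "strict_mono r" and g: "g \<in> fock_inf \<alpha>"
    and lim: "(\<lambda>n. fock_inf_norm \<alpha> (\<lambda>z. T (fs (r n)) z - g z)) \<longlonglongrightarrow> 0"
    by (rule compactD)
  have Tf: "T (fs n) \<in> fock_inf \<alpha>" for n using C fs by (simp add: compactD1)
  have "eventually (\<lambda>n. fock_inf_norm \<alpha> (\<lambda>z. T (fs (r n)) z - g z) < 1) sequentially"
    using lim by (rule order_tendstoD) simp
  then obtain n0 where n0: "\<And>n. n \<ge> n0 \<Longrightarrow> fock_inf_norm \<alpha> (\<lambda>z. T (fs (r n)) z - g z) < 1"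
    unfolding eventually_sequentially by blast
  define n where "n = n0 + nat \<lceil>1 + fock_inf_norm \<alpha> g\<rceil>"
  have "1 + fock_inf_norm \<alpha> g \<le> real (nat \<lceil>1 + fock_inf_norm \<alpha> g\<rceil>)" by (rule real_nat_ceiling_ge)
  moreover have "real n = real n0 + real (nat \<lceil>1 + fock_inf_norm \<alpha> g\<rceil>)" unfolding n_def by simp
  ultimately have "real n \<ge> 1 + fock_inf_norm \<alpha> g" by linarith
  moreover have "real (r n) \<ge> real n" using seq_suble[OF r, of n] by simp
  moreover have "F (a (r n)) \<le> fock_inf_norm \<alpha> (T (fs (r n)))"
    using fock_le_norm[OF Tf[of "r n"], of "a (r n)"] T_kn_diag[of "a (r n)"] unfolding fs_def by simp
  moreover have "fock_inf_norm \<alpha> (T (fs (r n))) \<le> fock_inf_norm \<alpha> (\<lambda>z. T (fs (r n)) z - g z) + fock_inf_norm \<alpha> g"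
    by (rule fock_norm_tri[OF Tf g])
  moreover have "fock_inf_norm \<alpha> (\<lambda>z. T (fs (r n)) z - g z) < 1" by (rule n0) (simp add: n_def)
  ultimately show False using a[of "r n"] by linarith
qed

lemma A_van:
  assumes C: "compact_on_fock_inf \<alpha> T"
  shows "(F \<longlongrightarrow> 0) at_infinity"
proof (rule ccontr)
  obtain B where B: "\<And>a. F a \<le> B" using A_bdd[OF C] by blast
  assume "\<not> (F \<longlongrightarrow> 0) at_infinity"
  then obtain e where e: "e > 0" and ex: "\<forall>b. \<exists>x. b \<le> norm x \<and> \<not> dist (F x) 0 < e"
    unfolding tendsto_iff eventually_at_infinity by blast
  have "\<forall>n::nat. \<exists>x. real n \<le> norm x \<and> e \<le> F x"
  proof
    fix n :: nat
    obtain x where "real n \<le> norm x" "\<not> dist (F x) 0 < e" using ex by blast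
    then show "\<exists>x. real n \<le> norm x \<and> e \<le> F x"
      using F_nonneg[of x] by (intro exI[of _ x]) (auto simp: dist_real_def)
  qed
  then obtain a where a1: "\<And>n. real n \<le> cmod (a n)" and a2: "\<And>n. e \<le> F (a n)"
    using choice[of "\<lambda>n x. real n \<le> norm x \<and> e \<le> F x"] by blast
  define fs where "fs = (\<lambda>n. kn (a n))"
  have fs: "\<forall>n. fs n \<in> fock_inf \<alpha>" unfolding fs_def by (simp add: kn_fock)
  have "bdd_above (range (\<lambda>n. fock_inf_norm \<alpha> (fs n)))"
    unfolding fs_def by (rule bdd_aboveI2[where M=1]) (simp add: kn_norm)
  with C fs obtain r g where r: "strict_mono r" and g: "g \<in> fock_inf \<alpha>"
    and lim: "(\<lambda>n. fock_inf_norm \<alpha> (\<lambda>z. T (fs (r n)) z - g z)) \<longlonglongrightarrow> 0"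
    by (rule compactD)
  have Tf: "T (fs n) \<in> fock_inf \<alpha>" for n using C fs by (simp add: compactD1)
  have g0: "g z = 0" for z
  proof -
    have "(\<lambda>n. T (fs (r n)) z - g z) \<longlonglongrightarrow> 0"
    proof (rule Lim_null_comparison)
      show "\<forall>\<^sub>F n in sequentially. cmod (T (fs (r n)) z - g z) \<le> fock_inf_norm \<alpha> (\<lambda>z. T (fs (r n)) z - g z) * exp (\<alpha> * (cmod z)\<^sup>2 / 2)"
        using fock_le_norm'[OF fock_diff[OF Tf g]] by simp
      show "(\<lambda>n. fock_inf_norm \<alpha> (\<lambda>z. T (fs (r n)) z - g z) * exp (\<alpha> * (cmod z)\<^sup>2 / 2)) \<longlonglongrightarrow> 0"
        using lim by (rule tendsto_mult_left_zero)
    qed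
    then have L1: "(\<lambda>n. T (fs (r n)) z) \<longlonglongrightarrow> g z" by (rule LIM_zero_cancel)
    have L2: "(\<lambda>n. T (fs (r n)) z) \<longlonglongrightarrow> 0"
    proof (rule Lim_null_comparison)
      define q where "q = exp (-\<alpha>/8)"
      have q: "0 < q" "q < 1" unfolding q_def using apos by auto
      show "\<forall>\<^sub>F n in sequentially. cmod (T (fs (r n)) z) \<le> (max B 0 * exp (3*\<alpha>*(cmod z)^2/4)) * q ^ n"
      proof (intro always_eventually allI)
        fix n
        let ?a = "a (r n)"
        have rn: "real n \<le> real (r n)" using seq_suble[OF r, of n] by simp
        have "cmod (T (fs (r n)) z) \<le> exp (-\<alpha>*(cmod ?a)^2/2 + \<alpha>*(cmod ((?a+z)/2))^2) * F ((?a+z)/2)"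
          unfolding fs_def by (rule T_kn_bound)
        also have "\<dots> \<le> exp (-\<alpha>*(cmod ?a)^2/8 + 3*\<alpha>*(cmod z)^2/4) * max B 0"
          by (intro mult_mono decay_exp) (use B F_nonneg in \<open>auto simp: le_max_iff_disj\<close>)
        also have "exp (-\<alpha>*(cmod ?a)^2/8 + 3*\<alpha>*(cmod z)^2/4) \<le> exp (3*\<alpha>*(cmod z)^2/4) * q ^ n"
        proof -
          have "real n \<le> cmod ?a" using rn a1[of "r n"] by simp
          then have "(real n)^2 \<le> (cmod ?a)^2"
            by (rule power_mono) simp
          moreover have "n \<le> n^2" by (cases n) (auto simp: power2_eq_square)
          then have "real n \<le> (real n)^2" by (metis of_nat_le_iff of_nat_power)
          ultimately have "real n \<le> (cmod ?a)^2" by linarith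
          then have "-\<alpha>*(cmod ?a)^2/8 \<le> real n * (-\<alpha>/8)" using apos by (simp add: algebra_simps)
          then have "exp (-\<alpha>*(cmod ?a)^2/8 + 3*\<alpha>*(cmod z)^2/4) \<le> exp (3*\<alpha>*(cmod z)^2/4 + real n * (-\<alpha>/8))"
            by simp
          also have "\<dots> = exp (3*\<alpha>*(cmod z)^2/4) * q ^ n"
            unfolding q_def by (simp only: exp_add exp_of_nat_mult[symmetric])
          finally show ?thesis .
        qed
        finally show "cmod (T (fs (r n)) z) \<le> (max B 0 * exp (3*\<alpha>*(cmod z)^2/4)) * q ^ n"
          by (simp add: mult_right_mono algebra_simps)
      qed
      show "(\<lambda>n. (max B 0 * exp (3*\<alpha>*(cmod z)^2/4)) * q ^ n) \<longlonglongrightarrow> 0"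
        by (rule tendsto_mult_right_zero) (rule LIMSEQ_power_zero, use q in auto)
    qed
    from L1 L2 show "g z = 0" by (rule LIMSEQ_unique)
  qed
  have "eventually (\<lambda>n. fock_inf_norm \<alpha> (\<lambda>z. T (fs (r n)) z - g z) < e) sequentially"
    using lim e by (rule order_tendstoD)
  then obtain n where n: "fock_inf_norm \<alpha> (\<lambda>z. T (fs (r n)) z - g z) < e"
    by (meson eventually_sequentially order_refl)
  have "(\<lambda>z. T (fs (r n)) z - g z) = T (fs (r n))" using g0 by auto
  moreover have "F (a (r n)) \<le> fock_inf_norm \<alpha> (T (fs (r n)))"
    using fock_le_norm[OF Tf[of "r n"], of "a (r n)"] T_kn_diag[of "a (r n)"] unfolding fs_def by simp
  ultimately show False using n a2[of "r n"] by simp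
qed

end

lemma gauss_real_finite:
  assumes "b > (0::real)"
  shows "(\<integral>\<^sup>+ x. ennreal (exp (- b * x\<^sup>2)) \<partial>lborel) < \<infinity>"
proof -
  define \<sigma> where "\<sigma> = sqrt (1/(2*b))"
  have s: "\<sigma> > 0" "\<sigma>\<^sup>2 = 1/(2*b)" unfolding \<sigma>_def using assms by auto
  have eq: "exp (- b * x\<^sup>2) = sqrt (2*pi*\<sigma>\<^sup>2) * normal_density 0 \<sigma> x" for x
    unfolding normal_density_def using s assms by (simp add: field_simps)
  have "(\<integral>\<^sup>+ x. ennreal (exp (- b * x\<^sup>2)) \<partial>lborel) = (\<integral>\<^sup>+ x. ennreal (sqrt (2*pi*\<sigma>\<^sup>2) * normal_density 0 \<sigma> x) \<partial>lborel)"
    by (simp only: eq)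
  also have "\<dots> = ennreal (\<integral>x. sqrt (2*pi*\<sigma>\<^sup>2) * normal_density 0 \<sigma> x \<partial>lborel)"
    using s assms by (intro nn_integral_eq_integral integrable_mult_right integrable_normal_density AE_I2) (auto intro!: mult_nonneg_nonneg)
  also have "\<dots> < \<infinity>" by simp
  finally show ?thesis .
qed

lemma gauss_cplx_finite:
  assumes "b > (0::real)"
  shows "(\<integral>\<^sup>+ y. ennreal (exp (- b * (cmod y)\<^sup>2)) \<partial>(lborel :: complex measure)) < \<infinity>"
proof -
  have eq: "ennreal (exp (- b * (cmod y)\<^sup>2)) = (\<Prod>u\<in>Basis. ennreal (exp (- b * (y \<bullet> u)\<^sup>2)))" for y :: complex
  proof -
    have "(\<Prod>u\<in>Basis. ennreal (exp (- b * (y \<bullet> u)\<^sup>2))) = ennreal (exp (- b * (Re y)\<^sup>2)) * ennreal (exp (- b * (Im y)\<^sup>2))"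
      by (simp add: Basis_complex_def inner_complex_def)
    also have "\<dots> = ennreal (exp (- b * (Re y)\<^sup>2) * exp (- b * (Im y)\<^sup>2))"
      by (simp add: ennreal_mult'')
    also have "exp (- b * (Re y)\<^sup>2) * exp (- b * (Im y)\<^sup>2) = exp (- b * (cmod y)\<^sup>2)"
      by (simp add: cmod_power2 mult_exp_exp algebra_simps)
    finally show ?thesis by simp
  qed
  have "(\<integral>\<^sup>+ y. ennreal (exp (- b * (cmod y)\<^sup>2)) \<partial>(lborel :: complex measure))
     = (\<integral>\<^sup>+ y. (\<Prod>u\<in>Basis. ennreal (exp (- b * (y \<bullet> u)\<^sup>2))) \<partial>(lborel :: complex measure))"
    by (simp only: eq)
  also have "\<dots> = (\<Prod>u\<in>(Basis::complex set). (\<integral>\<^sup>+ x. ennreal (exp (- b * x\<^sup>2)) \<partial>lborel))"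
    by (rule nn_integral_lborel_prod) auto
  also have "\<dots> < \<infinity>"
    using gauss_real_finite[OF assms] by (simp add: Basis_complex_def ennreal_mult_less_top)
  finally show ?thesis .
qed

lemma aux: fixes s P c :: real assumes "s > 0" shows "s*(P/s)^2 + c/s = (P^2 + c)/s"
  using assms by (simp add: power2_eq_square field_simps)

lemma quad_id1:
  fixes a b x y :: real
  assumes "a > 0" "b > 0"
  shows "a*(x-y)^2 + b*y^2 = (a+b)*(y - (a/(a+b))*x)^2 + (a*b/(a+b))*x^2"
proof -
  have ab: "a + b > 0" using assms by simp
  have e1: "y - (a/(a+b))*x = ((a+b)*y - a*x)/(a+b)" using ab by (simp add: field_simps)
  have e2: "((a+b)*y - a*x)^2 + a*b*x^2 = (a+b)*(a*(x-y)^2 + b*y^2)"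
    by (simp add: power2_eq_square algebra_simps)
  have "(a+b)*(y - (a/(a+b))*x)^2 + (a*b/(a+b))*x^2 = (((a+b)*y - a*x)^2 + a*b*x^2)/(a+b)"
    unfolding e1 using aux[OF ab, of "(a+b)*y - a*x" "a*b*x^2"] by (simp add: mult.assoc)
  also have "\<dots> = a*(x-y)^2 + b*y^2" unfolding e2 using ab by simp
  finally show ?thesis by simp
qed

lemma quad_id:
  fixes x y :: complex and a b :: real
  assumes "a > 0" "b > 0"
  shows "a*(cmod (x-y))^2 + b*(cmod y)^2 = (a+b)*(cmod (y - of_real (a/(a+b))*x))^2 + (a*b/(a+b))*(cmod x)^2"
proof -
  have "a*(cmod (x-y))^2 + b*(cmod y)^2 = (a*(Re x-Re y)^2 + b*(Re y)^2) + (a*(Im x-Im y)^2 + b*(Im y)^2)"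
    unfolding cmod_power2 by (simp add: algebra_simps)
  also have "\<dots> = ((a+b)*(Re y - (a/(a+b))*Re x)^2 + (a*b/(a+b))*(Re x)^2) + ((a+b)*(Im y - (a/(a+b))*Im x)^2 + (a*b/(a+b))*(Im x)^2)"
    using quad_id1[OF assms, of "Re x" "Re y"] quad_id1[OF assms, of "Im x" "Im y"] by simp
  also have "\<dots> = (a+b)*(cmod (y - of_real (a/(a+b))*x))^2 + (a*b/(a+b))*(cmod x)^2"
    unfolding cmod_power2 by (simp add: algebra_simps)
  finally show ?thesis .
qed

lemma conv_lower:
  fixes x :: complex and a b :: real
  assumes "a > 0" "b > 0"
  shows "ennreal (exp (-(a+b)) * exp (-(a*b/(a+b))*(cmod x)^2) * measure lborel (ball (0::complex) 1))
     \<le> (\<integral>\<^sup>+ y. ennreal (exp (-a*(cmod (x - y))^2) * exp (-b*(cmod y)^2)) \<partial>lborel)"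
proof -
  define c where "c = of_real (a/(a+b)) * x"
  define K where "K = exp (-(a+b)) * exp (-(a*b/(a+b))*(cmod x)^2)"
  have K0: "K \<ge> 0" unfolding K_def by simp
  have mb: "emeasure lborel (ball c 1) = emeasure lborel (ball (0::complex) 1)"
    using emeasure_lebesgue_ball_conv_unit_ball[of 1 c] by simp
  have "ennreal (K * measure lborel (ball (0::complex) 1)) = ennreal K * emeasure lborel (ball c 1)"
    using K0 mb emeasure_lborel_ball_finite[of "0::complex" 1]
    by (simp add: ennreal_mult' emeasure_eq_ennreal_measure)
  also have "\<dots> = (\<integral>\<^sup>+ y. ennreal K * indicator (ball c 1) y \<partial>lborel)"
    by (rule nn_integral_cmult_indicator[symmetric]) simp
  also have "\<dots> \<le> (\<integral>\<^sup>+ y. ennreal (exp (-a*(cmod (x - y))^2) * exp (-b*(cmod y)^2)) \<partial>lborel)"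
  proof (rule nn_integral_mono)
    fix y :: complex
    show "ennreal K * indicator (ball c 1) y \<le> ennreal (exp (-a*(cmod (x - y))^2) * exp (-b*(cmod y)^2))"
    proof (cases "y \<in> ball c 1")
      case True
      then have "cmod (y - c) < 1" by (simp add: dist_norm norm_minus_commute)
      then have "(cmod (y - c))^2 \<le> 1" by (simp add: power_le_one)
      then have "(a+b)*(cmod (y - c))^2 \<le> (a+b)" using assms by (simp add: mult_left_le)
      then have "a*(cmod (x-y))^2 + b*(cmod y)^2 \<le> (a+b) + (a*b/(a+b))*(cmod x)^2"
        using quad_id[OF assms, of x y] unfolding c_def by simp
      then have "K \<le> exp (-a*(cmod (x - y))^2) * exp (-b*(cmod y)^2)"
        unfolding K_def by (simp add: mult_exp_exp)
      then show ?thesis using True by simp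
    qed simp
  qed
  finally show ?thesis unfolding K_def .
qed


context fock begin

definition \<psi> :: "complex \<Rightarrow> real" where
  "\<psi> = (SOME \<psi>. \<psi> \<in> borel_measurable lborel \<and> (\<forall>w. \<psi> w \<ge> 0) \<and> (AE w in lborel. \<phi> w = \<psi> w))"

lemma psi_ex: "\<exists>\<psi>. \<psi> \<in> borel_measurable lborel \<and> (\<forall>w. \<psi> w \<ge> 0) \<and> (AE w in lborel. \<phi> w = \<psi> w)"
proof -
  obtain g where g: "g \<in> borel_measurable lborel" "AE x in lborel. \<phi> x = g x"
    using completion_ex_borel_measurable_real[OF meas] by blast
  have "(\<lambda>x. max 0 (g x)) \<in> borel_measurable lborel" using g(1) by measurable
  moreover have "AE x in lborel. \<phi> x = max 0 (g x)"
    using g(2) by eventually_elim (metis nonneg max.absorb2)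
  ultimately show ?thesis by (intro exI[of _ "\<lambda>x. max 0 (g x)"]) auto
qed

lemma psi_meas[measurable]: "\<psi> \<in> borel_measurable lborel"
  and psi_nonneg: "\<psi> w \<ge> 0"
  and psi_ae: "AE w in lborel. \<phi> w = \<psi> w"
  using someI_ex[OF psi_ex] unfolding \<psi>_def[symmetric] by auto

lemma N_lborel: "N t z = (\<integral>\<^sup>+ w. ennreal ((\<alpha>/pi) * \<psi> w * exp (-\<alpha>*t*(cmod (z - w))^2/2)) \<partial>lborel)"
  unfolding heat_transform_def nn_integral_completion
  by (rule nn_integral_cong_AE) (use psi_ae in \<open>eventually_elim, simp\<close>)

lemma N_int:
  assumes "N t z < \<infinity>"
  shows "integrable lebesgue (\<lambda>w. (\<alpha>/pi) * \<phi> w * exp (-\<alpha>*t*(cmod (z - w))^2/2))"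
    and "enn2real (N t z) = (\<integral>w. (\<alpha>/pi) * \<phi> w * exp (-\<alpha>*t*(cmod (z - w))^2/2) \<partial>lebesgue)"
proof -
  let ?f = "\<lambda>w. (\<alpha>/pi) * \<phi> w * exp (-\<alpha>*t*(cmod (z - w))^2/2)"
  have "(\<lambda>w. exp (-\<alpha>*t*(cmod (z - w))^2/2)) \<in> borel_measurable lebesgue"
    by (rule cont_meas) (intro continuous_intros; simp)
  then have m: "?f \<in> borel_measurable lebesgue" by measurable
  have nn: "AE w in lebesgue. 0 \<le> ?f w" using nonneg apos by simp
  have "(\<integral>\<^sup>+ w. ennreal (?f w) \<partial>lebesgue) = ennreal (enn2real (N t z))"
    using assms unfolding heat_transform_def by simp
  then show i: "integrable lebesgue ?f" by (rule integrableI_nn_integral_finite[OF m nn])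
  have "N t z = ennreal (integral\<^sup>L lebesgue ?f)"
    unfolding heat_transform_def by (rule nn_integral_eq_integral[OF i nn])
  moreover have "integral\<^sup>L lebesgue ?f \<ge> 0" by (rule integral_nonneg_AE[OF nn])
  ultimately show "enn2real (N t z) = integral\<^sup>L lebesgue ?f" by simp
qed

lemma N_mono_t:
  assumes "u \<le> t" "0 \<le> u"
  shows "N t z \<le> N u z"
  unfolding heat_transform_def
proof (rule nn_integral_mono)
  fix w
  have "\<alpha>*u*(cmod (z - w))^2 \<le> \<alpha>*t*(cmod (z - w))^2"
    using assms apos by (intro mult_right_mono mult_left_mono) auto
  then have "exp (-\<alpha>*t*(cmod (z - w))^2/2) \<le> exp (-\<alpha>*u*(cmod (z - w))^2/2)" by simp
  then show "ennreal ((\<alpha>/pi) * \<phi> w * exp (-\<alpha>*t*(cmod (z - w))^2/2)) \<le> ennreal ((\<alpha>/pi) * \<phi> w * exp (-\<alpha>*u*(cmod (z - w))^2/2))"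
    using nonneg[of w] apos by (intro ennreal_leI mult_left_mono) auto
qed

lemma N_conv:
  assumes t: "0 < t" "t < 2"
  obtains kc b where "kc \<ge> 0" "b > 0"
    "\<And>z. N t z \<le> ennreal kc * (\<integral>\<^sup>+ y. ennreal (exp (-b*(cmod y)^2) * F (z - y)) \<partial>lborel)"
proof -
  define c where "c = \<alpha>*t/2"
  have c: "0 < c" "c < \<alpha>" unfolding c_def using t apos by auto
  define b where "b = c*\<alpha>/(\<alpha> - c)"
  have b: "b > 0" unfolding b_def using c by simp
  have cb: "\<alpha>*b/(\<alpha>+b) = c"
  proof -
    have "\<alpha> + b = \<alpha>*\<alpha>/(\<alpha> - c)" unfolding b_def using c by (simp add: field_simps)
    then show ?thesis unfolding b_def using c apos by (simp add: field_simps)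
  qed
  define v where "v = measure lborel (ball (0::complex) 1)"
  have v: "v > 0" unfolding v_def using content_ball_pos[of 1 "0::complex"] by simp
  define kc where "kc = exp (\<alpha>+b) / v"
  have kc: "kc \<ge> 0" unfolding kc_def using v by simp
  define I where "I x = (\<integral>\<^sup>+ y. ennreal (exp (-\<alpha>*(cmod (x - y))^2) * exp (-b*(cmod y)^2)) \<partial>lborel)" for x
  have step1: "ennreal (exp (-c*(cmod x)^2)) \<le> ennreal kc * I x" for x
  proof -
    have "ennreal (exp (-c*(cmod x)^2)) = ennreal kc * ennreal (exp (-(\<alpha>+b)) * exp (-(\<alpha>*b/(\<alpha>+b))*(cmod x)^2) * v)"
      using kc v unfolding cb kc_def by (simp add: ennreal_mult'[symmetric] mult_exp_exp field_simps)
    also have "\<dots> \<le> ennreal kc * I x"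
      unfolding I_def v_def by (intro mult_left_mono conv_lower apos b) simp
    finally show ?thesis .
  qed
  have meas2: "(\<lambda>(w, y). ennreal ((\<alpha>/pi) * \<psi> w * exp (-\<alpha>*(cmod (z - y - w))^2)) * ennreal (exp (-b*(cmod y)^2)))
      \<in> borel_measurable (lborel \<Otimes>\<^sub>M lborel)" for z :: complex
    by measurable
  have "N t z \<le> ennreal kc * (\<integral>\<^sup>+ y. ennreal (exp (-b*(cmod y)^2) * F (z - y)) \<partial>lborel)" for z
  proof -
    have "N t z = (\<integral>\<^sup>+ w. ennreal ((\<alpha>/pi) * \<psi> w) * ennreal (exp (-c*(cmod (z - w))^2)) \<partial>lborel)"
      unfolding N_lborel c_def using apos psi_nonneg
      by (intro nn_integral_cong) (simp add: ennreal_mult'[symmetric] algebra_simps)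
    also have "\<dots> \<le> (\<integral>\<^sup>+ w. ennreal ((\<alpha>/pi) * \<psi> w) * (ennreal kc * I (z - w)) \<partial>lborel)"
      by (intro nn_integral_mono mult_left_mono step1) simp
    also have "\<dots> = (\<integral>\<^sup>+ w. ennreal kc * (\<integral>\<^sup>+ y. ennreal ((\<alpha>/pi) * \<psi> w * exp (-\<alpha>*(cmod (z - y - w))^2)) * ennreal (exp (-b*(cmod y)^2)) \<partial>lborel) \<partial>lborel)"
    proof (intro nn_integral_cong)
      fix w
      have "ennreal ((\<alpha>/pi) * \<psi> w) * I (z - w) = (\<integral>\<^sup>+ y. ennreal ((\<alpha>/pi) * \<psi> w) * ennreal (exp (-\<alpha>*(cmod (z - w - y))^2) * exp (-b*(cmod y)^2)) \<partial>lborel)"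
        unfolding I_def by (rule nn_integral_cmult[symmetric]) measurable
      also have "\<dots> = (\<integral>\<^sup>+ y. ennreal ((\<alpha>/pi) * \<psi> w * exp (-\<alpha>*(cmod (z - y - w))^2)) * ennreal (exp (-b*(cmod y)^2)) \<partial>lborel)"
      proof -
        have zz: "\<And>y. z - w - y = z - y - w" by (simp add: algebra_simps)
        show ?thesis using apos psi_nonneg[of w]
          by (intro nn_integral_cong) (simp add: ennreal_mult'[symmetric] ennreal_mult''[symmetric] zz mult_ac)
      qed
      finally show "ennreal ((\<alpha>/pi) * \<psi> w) * (ennreal kc * I (z - w)) = ennreal kc * (\<integral>\<^sup>+ y. ennreal ((\<alpha>/pi) * \<psi> w * exp (-\<alpha>*(cmod (z - y - w))^2)) * ennreal (exp (-b*(cmod y)^2)) \<partial>lborel)"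
        by (simp add: mult_ac)
    qed
    also have "\<dots> = ennreal kc * (\<integral>\<^sup>+ w. (\<integral>\<^sup>+ y. ennreal ((\<alpha>/pi) * \<psi> w * exp (-\<alpha>*(cmod (z - y - w))^2)) * ennreal (exp (-b*(cmod y)^2)) \<partial>lborel) \<partial>lborel)"
      by (rule nn_integral_cmult) (use meas2[of z] in measurable)
    also have "(\<integral>\<^sup>+ w. (\<integral>\<^sup>+ y. ennreal ((\<alpha>/pi) * \<psi> w * exp (-\<alpha>*(cmod (z - y - w))^2)) * ennreal (exp (-b*(cmod y)^2)) \<partial>lborel) \<partial>lborel)
        = (\<integral>\<^sup>+ y. (\<integral>\<^sup>+ w. ennreal ((\<alpha>/pi) * \<psi> w * exp (-\<alpha>*(cmod (z - y - w))^2)) * ennreal (exp (-b*(cmod y)^2)) \<partial>lborel) \<partial>lborel)"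
      by (rule lborel_pair.Fubini'[symmetric]) (rule meas2)
    also have "\<dots> = (\<integral>\<^sup>+ y. ennreal (exp (-b*(cmod y)^2) * F (z - y)) \<partial>lborel)"
    proof (intro nn_integral_cong)
      fix y
      have "(\<integral>\<^sup>+ w. ennreal ((\<alpha>/pi) * \<psi> w * exp (-\<alpha>*(cmod (z - y - w))^2)) * ennreal (exp (-b*(cmod y)^2)) \<partial>lborel)
          = (\<integral>\<^sup>+ w. ennreal ((\<alpha>/pi) * \<psi> w * exp (-\<alpha>*(cmod (z - y - w))^2)) \<partial>lborel) * ennreal (exp (-b*(cmod y)^2))"
        by (rule nn_integral_multc) measurable
      also have "(\<integral>\<^sup>+ w. ennreal ((\<alpha>/pi) * \<psi> w * exp (-\<alpha>*(cmod (z - y - w))^2)) \<partial>lborel) = N 2 (z - y)"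
        unfolding N_lborel by simp
      finally show "(\<integral>\<^sup>+ w. ennreal ((\<alpha>/pi) * \<psi> w * exp (-\<alpha>*(cmod (z - y - w))^2)) * ennreal (exp (-b*(cmod y)^2)) \<partial>lborel)
          = ennreal (exp (-b*(cmod y)^2) * F (z - y))"
        unfolding N2_eq by (simp add: ennreal_mult' F_nonneg mult.commute)
    qed
    finally show ?thesis .
  qed
  then show thesis using that kc b by blast
qed

end

lemma seq_to_infinity:
  fixes z :: "nat \<Rightarrow> complex"
  assumes "\<And>n. real n \<le> cmod (z n)"
  shows "filterlim (\<lambda>n. z n - y) at_infinity sequentially"
proof (subst filterlim_at_infinity[OF order_refl], intro allI impI)
  fix r :: real assume "0 < r"
  show "eventually (\<lambda>n. r \<le> norm (z n - y)) sequentially"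
    unfolding eventually_sequentially
  proof (intro exI allI impI)
    fix n assume "nat \<lceil>r + cmod y\<rceil> \<le> n"
    then have "r + cmod y \<le> real n" by linarith
    also have "\<dots> \<le> cmod (z n)" by (rule assms)
    also have "\<dots> \<le> cmod (z n - y) + cmod y" using norm_triangle_ineq[of "z n - y" y] by simp
    finally show "r \<le> norm (z n - y)" by simp
  qed
qed

lemma sq_tri: fixes a w x :: complex
  shows "(cmod (a - w))^2 \<le> 2*(cmod (x - w))^2 + 2*(cmod (x - a))^2"
proof -
  have "cmod (a - w) \<le> cmod (x - w) + cmod (x - a)"
    using norm_triangle_ineq4[of "x - w" "x - a"] by simp
  then have "(cmod (a - w))^2 \<le> (cmod (x - w) + cmod (x - a))^2"
    by (rule power_mono) simp
  also have "\<dots> \<le> 2*(cmod (x - w))^2 + 2*(cmod (x - a))^2"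
    using sum_squares_bound[of "cmod (x - w)" "cmod (x - a)"]
    by (simp add: power2_eq_square algebra_simps)
  finally show ?thesis .
qed

context fock begin

lemma F_eq: "F z = enn2real (N 2 z)"
  unfolding N2_eq using F_nonneg by simp

lemma N_fin:
  assumes B: "\<And>a. F a \<le> B" and t: "t > 0"
  shows "N t z < \<infinity>"
proof (cases "t \<ge> 2")
  case True
  then have "N t z \<le> N 2 z" by (intro N_mono_t) auto
  then show ?thesis unfolding N2_eq by (simp add: le_less_trans)
next
  case False
  obtain kc b where kc: "kc \<ge> 0" "b > 0"
    and le: "\<And>z. N t z \<le> ennreal kc * (\<integral>\<^sup>+ y. ennreal (exp (-b*(cmod y)^2) * F (z - y)) \<partial>lborel)"
    using N_conv[of t] t False by auto
  have "(\<integral>\<^sup>+ y. ennreal (exp (-b*(cmod y)^2) * F (z - y)) \<partial>lborel)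
       \<le> (\<integral>\<^sup>+ y. ennreal (exp (-b*(cmod y)^2)) * ennreal (max B 0) \<partial>lborel)"
    by (intro nn_integral_mono) (simp add: ennreal_mult''[symmetric] B le_max_iff_disj)
  also have "\<dots> = (\<integral>\<^sup>+ y. ennreal (exp (-b*(cmod y)^2)) \<partial>lborel) * ennreal (max B 0)"
    by (rule nn_integral_multc) measurable
  also have "\<dots> < \<infinity>"
    using gauss_cplx_finite[OF kc(2)] by (simp add: ennreal_mult_less_top)
  finally have "ennreal kc * (\<integral>\<^sup>+ y. ennreal (exp (-b*(cmod y)^2) * F (z - y)) \<partial>lborel) < \<infinity>"
    by (simp add: ennreal_mult_less_top)
  then show ?thesis using le[of z] by (simp add: le_less_trans)
qed

lemma N_cont:
  assumes B: "\<And>a. F a \<le> B" and t: "t > 0"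
  shows "continuous_on UNIV (\<lambda>z. enn2real (N t z))"
  unfolding continuous_on_sequentially
proof (intro allI ballI impI, elim conjE)
  fix x :: "nat \<Rightarrow> complex" and a :: complex
  assume lim: "x \<longlonglongrightarrow> a"
  have "Bseq (\<lambda>n. x n - a)"
    by (rule convergent_imp_Bseq[OF convergentI[OF tendsto_diff[OF lim tendsto_const]]])
  then obtain D where D: "D > 0" "\<And>n. cmod (x n - a) \<le> D" by (rule BseqE) blast
  have t2: "t/2 > 0" using t by simp
  note fin = N_fin[OF B t] N_fin[OF B t2]
  define s where "s n w = (\<alpha>/pi) * \<phi> w * exp (-\<alpha>*t*(cmod (x n - w))^2/2)" for n w
  define f where "f w = (\<alpha>/pi) * \<phi> w * exp (-\<alpha>*t*(cmod (a - w))^2/2)" for w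
  define g where "g w = exp (\<alpha>*t*D^2/2) * ((\<alpha>/pi) * \<phi> w * exp (-\<alpha>*(t/2)*(cmod (a - w))^2/2))" for w
  have ms: "s n \<in> borel_measurable lebesgue" for n
  proof -
    have "(\<lambda>w. exp (-\<alpha>*t*(cmod (x n - w))^2/2)) \<in> borel_measurable lebesgue"
      by (rule cont_meas) (intro continuous_intros; simp)
    then show ?thesis unfolding s_def[abs_def] by measurable
  qed
  have mf: "f \<in> borel_measurable lebesgue"
  proof -
    have "(\<lambda>w. exp (-\<alpha>*t*(cmod (a - w))^2/2)) \<in> borel_measurable lebesgue"
      by (rule cont_meas) (intro continuous_intros; simp)
    then show ?thesis unfolding f_def[abs_def] by measurable
  qed
  have ig: "integrable lebesgue g"
    unfolding g_def by (intro integrable_mult_right N_int(1)[OF fin(2)])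
  have "(\<lambda>n. integral\<^sup>L lebesgue (s n)) \<longlonglongrightarrow> integral\<^sup>L lebesgue f"
  proof (rule integral_dominated_convergence[OF mf ms ig])
    show "AE w in lebesgue. (\<lambda>n. s n w) \<longlonglongrightarrow> f w"
      unfolding s_def f_def by (intro AE_I2 tendsto_intros lim) simp
    fix n
    show "AE w in lebesgue. norm (s n w) \<le> g w"
    proof (intro AE_I2)
      fix w
      have "(cmod (a - w))^2 \<le> 2*(cmod (x n - w))^2 + 2*D^2"
      proof -
        have "(cmod (x n - a))^2 \<le> D^2" by (rule power_mono[OF D(2)]) simp
        then show ?thesis using sq_tri[of a w "x n"] by simp
      qed
      then have "(cmod (a - w))^2/4 - (cmod (x n - w))^2/2 - D^2/2 \<le> 0" by linarith
      then have "(\<alpha>*t)*((cmod (a - w))^2/4 - (cmod (x n - w))^2/2 - D^2/2) \<le> 0"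
        using apos t by (intro mult_nonneg_nonpos) auto
      then have "-\<alpha>*t*(cmod (x n - w))^2/2 \<le> \<alpha>*t*D^2/2 + (-\<alpha>*(t/2)*(cmod (a - w))^2/2)"
        by (simp add: algebra_simps)
      then have e: "exp (-\<alpha>*t*(cmod (x n - w))^2/2) \<le> exp (\<alpha>*t*D^2/2) * exp (-\<alpha>*(t/2)*(cmod (a - w))^2/2)"
        by (simp add: mult_exp_exp)
      have "norm (s n w) = (\<alpha>/pi) * \<phi> w * exp (-\<alpha>*t*(cmod (x n - w))^2/2)"
        unfolding s_def using apos nonneg[of w] by simp
      also have "\<dots> \<le> (\<alpha>/pi) * \<phi> w * (exp (\<alpha>*t*D^2/2) * exp (-\<alpha>*(t/2)*(cmod (a - w))^2/2))"
        using apos nonneg[of w] by (intro mult_left_mono e) auto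
      also have "\<dots> = g w" unfolding g_def by (simp add: mult_ac)
      finally show "norm (s n w) \<le> g w" .
    qed
  qed
  moreover have "enn2real (N t (x n)) = integral\<^sup>L lebesgue (s n)" for n
    unfolding s_def using N_int(2)[OF fin(1)] by simp
  moreover have "enn2real (N t a) = integral\<^sup>L lebesgue f"
    unfolding f_def using N_int(2)[OF fin(1)] by simp
  ultimately show "((\<lambda>z. enn2real (N t z)) \<circ> x) \<longlonglongrightarrow> enn2real (N t a)"
    by (simp add: o_def)
qed

lemma N_van:
  assumes B: "\<And>a. F a \<le> B" and Fv: "(F \<longlongrightarrow> 0) at_infinity" and t: "t > 0"
  shows "((\<lambda>z. enn2real (N t z)) \<longlongrightarrow> 0) at_infinity"
proof (cases "t \<ge> 2")
  case True
  have "enn2real (N t z) \<le> F z" for z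
    unfolding F_eq by (rule enn2real_mono) (use True N_mono_t N_fin[OF B] in auto)
  then have ev2: "\<forall>\<^sub>F z in at_infinity. enn2real (N t z) \<le> F z" by (intro always_eventually allI)
  have ev1: "\<forall>\<^sub>F z in at_infinity. 0 \<le> enn2real (N t z)" by (intro always_eventually allI) simp
  show ?thesis by (rule tendsto_sandwich[OF ev1 ev2 tendsto_const Fv])
next
  case False
  obtain kc b where kc: "kc \<ge> 0" "b > 0"
    and le: "\<And>z. N t z \<le> ennreal kc * (\<integral>\<^sup>+ y. ennreal (exp (-b*(cmod y)^2) * F (z - y)) \<partial>lborel)"
    using N_conv[of t] t False by auto
  have Fc: "continuous_on UNIV F"
    using N_cont[OF B, of 2] by (simp add: F_eq[abs_def])
  have Fm[measurable]: "F \<in> borel_measurable borel"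
    by (rule borel_measurable_continuous_onI[OF Fc])
  have ig: "integrable lborel (\<lambda>y::complex. exp (-b*(cmod y)^2))"
  proof (rule integrableI_bounded)
    show "(\<lambda>y::complex. exp (-b*(cmod y)^2)) \<in> borel_measurable lborel" by measurable
    show "(\<integral>\<^sup>+ y. ennreal (norm (exp (-b*(cmod y)^2))) \<partial>(lborel::complex measure)) < \<infinity>"
      using gauss_cplx_finite[OF kc(2)] by simp
  qed
  have igB: "integrable lborel (\<lambda>y::complex. max B 0 * exp (-b*(cmod y)^2))"
    by (rule integrable_mult_right[OF ig])
  have bnd: "norm (exp (-b*(cmod y)^2) * F (z - y)) \<le> max B 0 * exp (-b*(cmod y)^2)" for y z
  proof -
    have "F (z - y) \<le> max B 0" using B[of "z - y"] by (simp add: le_max_iff_disj)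
    then have "exp (-b*(cmod y)^2) * F (z - y) \<le> exp (-b*(cmod y)^2) * max B 0"
      by (intro mult_left_mono) auto
    moreover have "0 \<le> exp (-b*(cmod y)^2) * F (z - y)" using F_nonneg[of "z - y"] by simp
    ultimately show ?thesis by (simp add: mult.commute)
  qed
  have iF: "integrable lborel (\<lambda>y. exp (-b*(cmod y)^2) * F (z - y))" for z
  proof (rule Bochner_Integration.integrable_bound[OF igB])
    show "(\<lambda>y. exp (-b*(cmod y)^2) * F (z - y)) \<in> borel_measurable lborel" by measurable
    show "AE y in lborel. norm (exp (-b*(cmod y)^2) * F (z - y)) \<le> norm (max B 0 * exp (-b*(cmod y)^2))"
    proof (intro AE_I2)
      fix y
      have "0 \<le> max B 0 * exp (-b*(cmod y)^2)" by simp
      then show "norm (exp (-b*(cmod y)^2) * F (z - y)) \<le> norm (max B 0 * exp (-b*(cmod y)^2))"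
        using bnd[of y z] by (simp only: real_norm_def abs_of_nonneg)
    qed
  qed
  define \<Phi> where "\<Phi> z = (\<integral>y. exp (-b*(cmod y)^2) * F (z - y) \<partial>lborel)" for z
  have le2: "enn2real (N t z) \<le> kc * \<Phi> z" for z
  proof -
    have "(\<integral>\<^sup>+ y. ennreal (exp (-b*(cmod y)^2) * F (z - y)) \<partial>lborel) = ennreal (\<Phi> z)"
      unfolding \<Phi>_def by (rule nn_integral_eq_integral[OF iF]) (simp add: F_nonneg)
    then have "N t z \<le> ennreal (kc * \<Phi> z)"
      using le[of z] kc by (simp add: ennreal_mult')
    moreover have "\<Phi> z \<ge> 0" unfolding \<Phi>_def by (rule integral_nonneg_AE) (simp add: F_nonneg)
    ultimately have "enn2real (N t z) \<le> enn2real (ennreal (kc * \<Phi> z))"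
      by (intro enn2real_mono) auto
    also have "\<dots> = kc * \<Phi> z" using kc \<open>\<Phi> z \<ge> 0\<close> by simp
    finally show ?thesis .
  qed
  have \<Phi>0: "(\<Phi> \<longlongrightarrow> 0) at_infinity"
  proof (rule ccontr)
    assume "\<not> (\<Phi> \<longlongrightarrow> 0) at_infinity"
    then obtain e where e: "e > 0" and ex: "\<forall>b. \<exists>x. b \<le> norm x \<and> \<not> dist (\<Phi> x) 0 < e"
      unfolding tendsto_iff eventually_at_infinity by blast
    then obtain z where z1: "\<And>n. real n \<le> cmod (z n)" and z2: "\<And>n. \<not> dist (\<Phi> (z n)) 0 < e"
      using choice[of "\<lambda>n x. real n \<le> norm x \<and> \<not> dist (\<Phi> x) 0 < e"] by blast
    define sq where "sq n y = exp (-b*(cmod y)^2) * F (z n - y)" for n y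
    have m1: "(\<lambda>y::complex. 0::real) \<in> borel_measurable lborel" by simp
    have m2: "sq n \<in> borel_measurable lborel" for n unfolding sq_def[abs_def] by measurable
    have ae: "AE y in lborel. (\<lambda>n. sq n y) \<longlonglongrightarrow> 0"
    proof (intro AE_I2)
      fix y
      have "(\<lambda>n. F (z n - y)) \<longlonglongrightarrow> 0"
        using filterlim_compose[OF Fv seq_to_infinity[OF z1]] by simp
      then show "(\<lambda>n. sq n y) \<longlonglongrightarrow> 0"
        unfolding sq_def by (rule tendsto_mult_right_zero)
    qed
    have bd: "AE y in lborel. norm (sq n y) \<le> max B 0 * exp (-b*(cmod y)^2)" for n
      unfolding sq_def using bnd by simp
    have "(\<lambda>n. integral\<^sup>L lborel (sq n)) \<longlonglongrightarrow> integral\<^sup>L lborel (\<lambda>y::complex. 0::real)"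
      by (rule integral_dominated_convergence[OF m1 m2 igB ae bd])
    then have "(\<lambda>n. \<Phi> (z n)) \<longlonglongrightarrow> integral\<^sup>L lborel (\<lambda>y::complex. 0::real)"
      unfolding \<Phi>_def sq_def by simp
    then have "(\<lambda>n. \<Phi> (z n)) \<longlonglongrightarrow> 0" by (simp only: integral_zero)
    then have "eventually (\<lambda>n. dist (\<Phi> (z n)) 0 < e) sequentially"
      using e by (rule tendstoD)
    then obtain N0 where "\<forall>n\<ge>N0. dist (\<Phi> (z n)) 0 < e" unfolding eventually_sequentially by blast
    then show False using z2[of N0] by blast
  qed
  have lim: "((\<lambda>z. kc * \<Phi> z) \<longlongrightarrow> 0) at_infinity"
    by (rule tendsto_mult_right_zero[OF \<Phi>0])
  have ev1: "\<forall>\<^sub>F z in at_infinity. 0 \<le> enn2real (N t z)" by (intro always_eventually allI) simp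
  have ev2: "\<forall>\<^sub>F z in at_infinity. enn2real (N t z) \<le> kc * \<Phi> z" by (intro always_eventually allI le2)
  show ?thesis by (rule tendsto_sandwich[OF ev1 ev2 tendsto_const lim])
qed

lemma heat_all:
  assumes B: "\<And>a. F a \<le> B" and Fv: "(F \<longlongrightarrow> 0) at_infinity"
  shows "\<forall>t>0. in_C0 (N t)"
  unfolding in_C0_def using N_fin[OF B] N_cont[OF B] N_van[OF B Fv] by blast

lemma part_A:
  assumes "compact_on_fock_inf \<alpha> T"
  shows "\<forall>t>0. in_C0 (N t)"
  using A_bdd[OF assms] A_van[OF assms] heat_all by blast

end

lemma exp_sub1_bound: fixes v :: complex
  shows "cmod (exp v - 1) \<le> cmod v * exp (cmod v)"
proof -
  have "norm (exp v - exp 0) \<le> exp (cmod v) * norm (v - 0)"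
  proof (rule field_differentiable_bound[where S="cball 0 (cmod v)" and f'=exp])
    show "convex (cball (0::complex) (cmod v))" by simp
    fix z :: complex assume z: "z \<in> cball 0 (cmod v)"
    show "(exp has_field_derivative exp z) (at z within cball 0 (cmod v))"
      by (rule DERIV_subset[OF DERIV_exp]) simp
    have "norm (exp z) \<le> exp (norm z)" by (rule norm_exp)
    also have "\<dots> \<le> exp (cmod v)" using z by simp
    finally show "norm (exp z) \<le> exp (cmod v)" .
  qed auto
  then show ?thesis by (simp add: mult.commute)
qed

lemma quad_bound: fixes a x \<beta> :: real assumes "a > 0"
  shows "\<beta>*x - a*x^2/4 \<le> \<beta>^2/a"
proof -
  have "0 \<le> (a*x - 2*\<beta>)^2" by simp
  then have "0 \<le> (a*x - 2*\<beta>)^2 / (4*a)" using assms by simp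
  also have "(a*x - 2*\<beta>)^2 / (4*a) = \<beta>^2/a - (\<beta>*x - a*x^2/4)"
    using assms by (simp add: power2_eq_square field_simps)
  finally show ?thesis by simp
qed

context fock begin

definition Ig :: "(complex \<Rightarrow> complex) \<Rightarrow> complex \<Rightarrow> complex \<Rightarrow> complex" where
  "Ig h z w = complex_of_real (\<phi> w * gauss_dens \<alpha> w) * h w * cnj (fock_kernel \<alpha> z w)"

lemma T_Ig: "T h z = integral\<^sup>L lebesgue (Ig h z)"
  unfolding toeplitz_def Ig_def by simp

lemma Ig_norm: "norm (Ig h z w) = exp (\<alpha>*(cmod z)^2/2) *
   ((\<alpha>/pi) * \<phi> w * (cmod (h w) * exp (-\<alpha>*(cmod w)^2/2)) * exp (-\<alpha>*(cmod (z - w))^2/2))"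
proof -
  have "norm (Ig h z w) = \<phi> w * (\<alpha>/pi) * cmod (h w) * (exp (-\<alpha>*(cmod w)^2) * exp (\<alpha> * Re (cnj z * w)))"
  proof -
    have "norm (Ig h z w) = \<bar>\<phi> w * gauss_dens \<alpha> w\<bar> * cmod (h w) * cmod (fock_kernel \<alpha> z w)"
      unfolding Ig_def by (simp only: norm_mult norm_of_real complex_mod_cnj)
    then show ?thesis using nonneg[of w] apos by (simp add: kern_norm gauss_dens_def mult_ac)
  qed
  also have "exp (-\<alpha>*(cmod w)^2) * exp (\<alpha> * Re (cnj z * w)) = exp (-\<alpha>*(cmod w)^2/2) * exp (-\<alpha>*(cmod w)^2/2 + \<alpha> * Re (cnj z * w))"
    by (simp add: mult_exp_exp)
  also have "-\<alpha>*(cmod w)^2/2 + \<alpha> * Re (cnj z * w) = -\<alpha>*(cmod (w - z))^2/2 + \<alpha>*(cmod z)^2/2"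
    by (rule E1h)
  finally have "norm (Ig h z w) = \<phi> w * (\<alpha>/pi) * cmod (h w) * (exp (-\<alpha>*(cmod w)^2/2) * exp (-\<alpha>*(cmod (w - z))^2/2 + \<alpha>*(cmod z)^2/2))" .
  moreover have "exp (-\<alpha>*(cmod (w - z))^2/2 + \<alpha>*(cmod z)^2/2) = exp (\<alpha>*(cmod z)^2/2) * exp (-\<alpha>*(cmod (z - w))^2/2)"
    by (simp add: mult_exp_exp norm_minus_commute algebra_simps)
  ultimately show ?thesis by (simp only: mult_ac)
qed

lemma Ig_meas:
  assumes "continuous_on UNIV h"
  shows "Ig h z \<in> borel_measurable lebesgue"
proof -
  have c: "(\<lambda>w. gauss_dens \<alpha> w) \<in> borel_measurable lebesgue"
    unfolding gauss_dens_def by (rule cont_meas) (intro continuous_intros)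
  have "(\<lambda>w. h w * cnj (fock_kernel \<alpha> z w)) \<in> borel_measurable lebesgue"
    unfolding kern_cnj by (rule cont_meas) (intro continuous_intros assms)
  then show ?thesis unfolding Ig_def[abs_def] using c by (simp add: mult.assoc) measurable
qed

lemma N1_fin_int:
  assumes H: "\<forall>t>0. in_C0 (N t)" and t: "t > 0"
  shows "integrable lebesgue (\<lambda>w. (\<alpha>/pi) * \<phi> w * exp (-\<alpha>*t*(cmod (z - w))^2/2))"
  by (rule N_int(1)) (use H t in \<open>auto simp: in_C0_def\<close>)

lemma Q_int:
  assumes H: "\<forall>t>0. in_C0 (N t)" and hc: "continuous_on UNIV h"
    and hb: "\<And>w. cmod (h w) * exp (-\<alpha>*(cmod w)^2/2) \<le> C"
  shows "integrable lebesgue (\<lambda>w. (\<alpha>/pi) * \<phi> w * (cmod (h w) * exp (-\<alpha>*(cmod w)^2/2)) * exp (-\<alpha>*(cmod (z - w))^2/2))"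
proof (rule Bochner_Integration.integrable_bound)
  show "integrable lebesgue (\<lambda>w. C * ((\<alpha>/pi) * \<phi> w * exp (-\<alpha>*1*(cmod (z - w))^2/2)))"
    by (intro integrable_mult_right N1_fin_int[OF H]) simp
  have m1: "(\<lambda>w. cmod (h w) * exp (-\<alpha>*(cmod w)^2/2) * exp (-\<alpha>*(cmod (z - w))^2/2)) \<in> borel_measurable lebesgue"
    by (rule cont_meas) (intro continuous_intros hc; simp)
  then show "(\<lambda>w. (\<alpha>/pi) * \<phi> w * (cmod (h w) * exp (-\<alpha>*(cmod w)^2/2)) * exp (-\<alpha>*(cmod (z - w))^2/2)) \<in> borel_measurable lebesgue"
    by (simp add: mult.assoc) measurable
  show "AE w in lebesgue. norm ((\<alpha>/pi) * \<phi> w * (cmod (h w) * exp (-\<alpha>*(cmod w)^2/2)) * exp (-\<alpha>*(cmod (z - w))^2/2))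
      \<le> norm (C * ((\<alpha>/pi) * \<phi> w * exp (-\<alpha>*1*(cmod (z - w))^2/2)))"
  proof (intro AE_I2)
    fix w
    have C0: "0 \<le> C" using hb[of w] by (meson mult_nonneg_nonneg norm_ge_zero exp_ge_zero order_trans)
    have p: "0 \<le> (\<alpha>/pi) * \<phi> w * exp (-\<alpha>*(cmod (z - w))^2/2)" using apos nonneg[of w] by simp
    have "(\<alpha>/pi) * \<phi> w * (cmod (h w) * exp (-\<alpha>*(cmod w)^2/2)) * exp (-\<alpha>*(cmod (z - w))^2/2)
        = (cmod (h w) * exp (-\<alpha>*(cmod w)^2/2)) * ((\<alpha>/pi) * \<phi> w * exp (-\<alpha>*(cmod (z - w))^2/2))"
      by (simp add: mult_ac)
    also have "\<dots> \<le> C * ((\<alpha>/pi) * \<phi> w * exp (-\<alpha>*(cmod (z - w))^2/2))"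
      by (rule mult_right_mono[OF hb p])
    finally show "norm ((\<alpha>/pi) * \<phi> w * (cmod (h w) * exp (-\<alpha>*(cmod w)^2/2)) * exp (-\<alpha>*(cmod (z - w))^2/2))
      \<le> norm (C * ((\<alpha>/pi) * \<phi> w * exp (-\<alpha>*1*(cmod (z - w))^2/2)))"
      using apos nonneg[of w] C0 p by (simp add: abs_mult)
  qed
qed

lemma Ig_int:
  assumes H: "\<forall>t>0. in_C0 (N t)" and hc: "continuous_on UNIV h"
    and hb: "\<And>w. cmod (h w) * exp (-\<alpha>*(cmod w)^2/2) \<le> C"
  shows "integrable lebesgue (Ig h z)"
proof (rule Bochner_Integration.integrable_bound)
  show "integrable lebesgue (\<lambda>w. exp (\<alpha>*(cmod z)^2/2) *
     ((\<alpha>/pi) * \<phi> w * (cmod (h w) * exp (-\<alpha>*(cmod w)^2/2)) * exp (-\<alpha>*(cmod (z - w))^2/2)))"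
    by (intro integrable_mult_right Q_int[OF H hc hb])
  show "Ig h z \<in> borel_measurable lebesgue" by (rule Ig_meas[OF hc])
  show "AE w in lebesgue. norm (Ig h z w) \<le> norm (exp (\<alpha>*(cmod z)^2/2) *
     ((\<alpha>/pi) * \<phi> w * (cmod (h w) * exp (-\<alpha>*(cmod w)^2/2)) * exp (-\<alpha>*(cmod (z - w))^2/2)))"
    by (intro AE_I2) (simp only: Ig_norm real_norm_def abs_ge_self)
qed

lemma T_est:
  assumes H: "\<forall>t>0. in_C0 (N t)" and hc: "continuous_on UNIV h"
    and hb: "\<And>w. cmod (h w) * exp (-\<alpha>*(cmod w)^2/2) \<le> C"
  shows "cmod (T h z) * exp (-\<alpha>*(cmod z)^2/2) \<le>
    (\<integral>w. (\<alpha>/pi) * \<phi> w * (cmod (h w) * exp (-\<alpha>*(cmod w)^2/2)) * exp (-\<alpha>*(cmod (z - w))^2/2) \<partial>lebesgue)"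
proof -
  have "cmod (T h z) \<le> (\<integral>w. norm (Ig h z w) \<partial>lebesgue)"
    unfolding T_Ig by (rule integral_norm_bound)
  also have "\<dots> = exp (\<alpha>*(cmod z)^2/2) *
    (\<integral>w. (\<alpha>/pi) * \<phi> w * (cmod (h w) * exp (-\<alpha>*(cmod w)^2/2)) * exp (-\<alpha>*(cmod (z - w))^2/2) \<partial>lebesgue)"
    by (simp only: Ig_norm integral_mult_right_zero)
  finally show ?thesis by (simp add: exp_minus field_simps)
qed

end

lemma exp_lin_deriv: fixes c :: complex
  shows "((\<lambda>u. (exp (c*u) - 1)/u) \<longlongrightarrow> c) (at 0)"
proof -
  have "((\<lambda>u. exp (c*u)) has_field_derivative c * exp (c*0)) (at 0)"
    by (auto intro!: derivative_eq_intros)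
  then have "((\<lambda>y. (exp (c*y) - exp (c*0)) / (y - 0)) \<longlongrightarrow> c * exp (c*0)) (at 0)"
    by (simp only: has_field_derivative_iff)
  then show ?thesis by simp
qed

context fock begin

lemma T_holo:
  assumes H: "\<forall>t>0. in_C0 (N t)" and hh: "h holomorphic_on UNIV"
    and hb: "\<And>w. cmod (h w) * exp (-\<alpha>*(cmod w)^2/2) \<le> C"
  shows "T h holomorphic_on UNIV"
proof -
  have hc: "continuous_on UNIV h" by (rule holomorphic_on_imp_continuous_on[OF hh])
  have C0: "0 \<le> C" using hb[of 0] by (meson mult_nonneg_nonneg norm_ge_zero exp_ge_zero order_trans)
  have der: "\<exists>D. (T h has_field_derivative D) (at z0)" for z0
  proof -
    define Dg where "Dg w = Ig h z0 w * (complex_of_real \<alpha> * cnj w)" for w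
    have mIg: "Ig h z0 \<in> borel_measurable lebesgue" by (rule Ig_meas[OF hc])
    have iIg: "integrable lebesgue (Ig h z) " for z by (rule Ig_int[OF H hc hb])
    have mc: "(\<lambda>w. complex_of_real \<alpha> * cnj w) \<in> borel_measurable lebesgue"
      by (rule cont_meas) (intro continuous_intros)
    have mDg: "Dg \<in> borel_measurable lebesgue"
      unfolding Dg_def[abs_def] using mIg mc by (rule borel_measurable_times)
    show ?thesis
    proof (intro exI)
      show "(T h has_field_derivative integral\<^sup>L lebesgue Dg) (at z0)"
        unfolding has_field_derivative_iff tendsto_at_iff_sequentially
      proof (intro allI impI)
        fix X :: "nat \<Rightarrow> complex"
        assume X: "\<forall>i. X i \<in> UNIV - {z0}" and Xl: "X \<longlonglongrightarrow> z0"
        define u where "u i = X i - z0" for i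
        have u0: "u i \<noteq> 0" for i using X unfolding u_def by auto
        have ul: "u \<longlonglongrightarrow> 0" unfolding u_def using tendsto_diff[OF Xl tendsto_const[of z0]] by simp
        have "Bseq u" by (rule convergent_imp_Bseq[OF convergentI[OF ul]])
        then obtain Dd where Dd: "Dd > 0" "\<And>i. cmod (u i) \<le> Dd" by (rule BseqE) blast
        define s where "s i w = Ig h z0 w * ((exp (complex_of_real \<alpha> * u i * cnj w) - 1) / u i)" for i w
        have Igs: "Ig h (X i) w = Ig h z0 w * exp (complex_of_real \<alpha> * u i * cnj w)" for i w
        proof -
          have "cnj (fock_kernel \<alpha> (X i) w) = cnj (fock_kernel \<alpha> z0 w) * exp (complex_of_real \<alpha> * u i * cnj w)"
            unfolding kern_cnj u_def by (simp add: exp_add[symmetric] algebra_simps)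
          then show ?thesis unfolding Ig_def by (simp add: mult_ac)
        qed
        have quot: "(T h (X i) - T h z0) / (X i - z0) = integral\<^sup>L lebesgue (s i)" for i
        proof -
          have "T h (X i) - T h z0 = integral\<^sup>L lebesgue (\<lambda>w. Ig h (X i) w - Ig h z0 w)"
            unfolding T_Ig by (rule Bochner_Integration.integral_diff[symmetric, OF iIg iIg])
          also have "\<dots> = integral\<^sup>L lebesgue (\<lambda>w. Ig h z0 w * (exp (complex_of_real \<alpha> * u i * cnj w) - 1))"
            unfolding Igs by (simp add: algebra_simps)
          finally have "(T h (X i) - T h z0) / (X i - z0) = integral\<^sup>L lebesgue (\<lambda>w. Ig h z0 w * (exp (complex_of_real \<alpha> * u i * cnj w) - 1)) / u i"
            unfolding u_def by simp
          also have "\<dots> = integral\<^sup>L lebesgue (s i)"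
            unfolding s_def by (simp add: integral_divide_zero[symmetric] del: integral_divide_zero)
          finally show ?thesis .
        qed
        define \<beta> where "\<beta> = 1 + \<alpha>*Dd"
        have \<beta>0: "\<beta> \<ge> 0" unfolding \<beta>_def using apos Dd by simp
        define K1 where "K1 = exp (\<alpha>*(cmod z0)^2/2) * C * \<alpha> * exp (\<beta>*cmod z0) * exp (\<beta>^2/\<alpha>)"
        define gd where "gd w = K1 * ((\<alpha>/pi) * \<phi> w * exp (-\<alpha>*(1/2)*(cmod (z0 - w))^2/2))" for w
        have igd: "integrable lebesgue gd"
          unfolding gd_def by (intro integrable_mult_right N1_fin_int[OF H]) simp
        have ms: "s i \<in> borel_measurable lebesgue" for i
        proof -
          have "(\<lambda>w. (exp (complex_of_real \<alpha> * u i * cnj w) - 1) / u i) \<in> borel_measurable lebesgue"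
            by (rule cont_meas) (intro continuous_intros; simp add: u0)
          then show ?thesis unfolding s_def[abs_def] using mIg by (intro borel_measurable_times)
        qed
        have conv: "(\<lambda>i. integral\<^sup>L lebesgue (s i)) \<longlonglongrightarrow> integral\<^sup>L lebesgue Dg"
        proof (rule integral_dominated_convergence[OF mDg ms igd])
          show "AE w in lebesgue. (\<lambda>i. s i w) \<longlonglongrightarrow> Dg w"
          proof (intro AE_I2)
            fix w
            have fl: "filterlim u (at 0) sequentially"
              by (rule filterlim_atI[OF ul]) (simp add: u0)
            have "((\<lambda>x. (exp ((complex_of_real \<alpha> * cnj w) * x) - 1) / x) \<longlongrightarrow> complex_of_real \<alpha> * cnj w) (at 0)"
              by (rule exp_lin_deriv)
            from filterlim_compose[OF this fl]
            have "(\<lambda>i. (exp (complex_of_real \<alpha> * cnj w * u i) - 1) / u i) \<longlonglongrightarrow> complex_of_real \<alpha> * cnj w" .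
            then have "(\<lambda>i. Ig h z0 w * ((exp (complex_of_real \<alpha> * cnj w * u i) - 1) / u i)) \<longlonglongrightarrow> Ig h z0 w * (complex_of_real \<alpha> * cnj w)"
              by (intro tendsto_mult tendsto_const)
            then show "(\<lambda>i. s i w) \<longlonglongrightarrow> Dg w" unfolding s_def Dg_def by (simp add: mult_ac)
          qed
          fix i
          show "AE w in lebesgue. norm (s i w) \<le> gd w"
          proof (intro AE_I2)
            fix w
            define R where "R = cmod w"
            define Sd where "Sd = cmod (z0 - w)"
            define P where "P = (\<alpha>/pi) * \<phi> w"
            have P0: "P \<ge> 0" unfolding P_def using apos nonneg[of w] by simp
            have R0: "R \<ge> 0" "Sd \<ge> 0" unfolding R_def Sd_def by simp_all
            define E0 where "E0 = exp (\<alpha>*(cmod z0)^2/2)"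
            have nIg: "norm (Ig h z0 w) \<le> E0 * P * C * exp (-\<alpha>*Sd^2/2)"
            proof -
              have "norm (Ig h z0 w) = E0 * P * (cmod (h w) * exp (-\<alpha>*R^2/2)) * exp (-\<alpha>*Sd^2/2)"
                unfolding Ig_norm E0_def P_def R_def Sd_def by (simp add: mult_ac)
              also have "\<dots> \<le> E0 * P * C * exp (-\<alpha>*Sd^2/2)"
                unfolding R_def using hb[of w] P0 unfolding E0_def
                by (intro mult_right_mono mult_left_mono) auto
              finally show ?thesis .
            qed
            have nq: "norm ((exp (complex_of_real \<alpha> * u i * cnj w) - 1) / u i) \<le> \<alpha> * exp (\<beta>*Sd) * exp (\<beta>*cmod z0)"
            proof -
              have nv: "cmod (complex_of_real \<alpha> * u i * cnj w) = \<alpha> * cmod (u i) * R"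
                unfolding R_def using apos by (simp add: norm_mult)
              have "norm (exp (complex_of_real \<alpha> * u i * cnj w) - 1) \<le> \<alpha> * cmod (u i) * R * exp (\<alpha> * cmod (u i) * R)"
                using exp_sub1_bound[of "complex_of_real \<alpha> * u i * cnj w"] unfolding nv .
              then have "norm ((exp (complex_of_real \<alpha> * u i * cnj w) - 1) / u i) \<le> \<alpha> * R * exp (\<alpha> * cmod (u i) * R)"
                using u0[of i] by (simp add: norm_divide field_simps)
              also have "\<dots> \<le> \<alpha> * R * exp (\<alpha> * Dd * R)"
                using apos R0 Dd(2)[of i] by (intro mult_left_mono) (auto intro!: mult_right_mono)
              also have "\<dots> \<le> \<alpha> * (exp R * exp (\<alpha> * Dd * R))"
              proof -
                have "R \<le> exp R" using exp_ge_add_one_self[of R] by linarith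
                then have "R * exp (\<alpha> * Dd * R) \<le> exp R * exp (\<alpha> * Dd * R)" by (rule mult_right_mono) simp
                then show ?thesis using apos by (simp add: mult.assoc)
              qed
              also have "exp R * exp (\<alpha> * Dd * R) = exp (\<beta> * R)" unfolding \<beta>_def by (simp add: mult_exp_exp algebra_simps)
              also have "exp (\<beta> * R) \<le> exp (\<beta> * (Sd + cmod z0))"
              proof -
                have "R \<le> Sd + cmod z0" unfolding R_def Sd_def using norm_triangle_ineq4[of z0 "z0 - w"] by simp
                then show ?thesis using \<beta>0 by (simp add: mult_left_mono)
              qed
              also have "exp (\<beta> * (Sd + cmod z0)) = exp (\<beta>*Sd) * exp (\<beta>*cmod z0)"
                by (simp add: mult_exp_exp algebra_simps)
              finally show ?thesis using apos by (simp add: mult_left_mono)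
            qed
            have qb: "exp (\<beta>*Sd) * exp (-\<alpha>*Sd^2/2) \<le> exp (\<beta>^2/\<alpha>) * exp (-\<alpha>*Sd^2/4)"
            proof -
              have "\<beta>*Sd - \<alpha>*Sd^2/4 \<le> \<beta>^2/\<alpha>" by (rule quad_bound[OF apos])
              then have "\<beta>*Sd + (-\<alpha>*Sd^2/2) \<le> \<beta>^2/\<alpha> + (-\<alpha>*Sd^2/4)" by simp
              then show ?thesis by (simp only: mult_exp_exp exp_le_cancel_iff)
            qed
            have "norm (s i w) = norm (Ig h z0 w) * norm ((exp (complex_of_real \<alpha> * u i * cnj w) - 1) / u i)"
              unfolding s_def by (rule norm_mult)
            also have "\<dots> \<le> (E0 * P * C * exp (-\<alpha>*Sd^2/2)) * (\<alpha> * exp (\<beta>*Sd) * exp (\<beta>*cmod z0))"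
              by (rule mult_mono[OF nIg nq]) (use P0 C0 E0_def in auto)
            also have "\<dots> = (E0 * C * \<alpha> * exp (\<beta>*cmod z0)) * P * (exp (\<beta>*Sd) * exp (-\<alpha>*Sd^2/2))"
              by (simp add: mult_ac)
            also have "\<dots> \<le> (E0 * C * \<alpha> * exp (\<beta>*cmod z0)) * P * (exp (\<beta>^2/\<alpha>) * exp (-\<alpha>*Sd^2/4))"
              using P0 C0 apos unfolding E0_def by (intro mult_left_mono qb) auto
            also have "\<dots> = gd w"
              unfolding gd_def K1_def E0_def P_def Sd_def by (simp add: mult_ac)
            finally show "norm (s i w) \<le> gd w" .
          qed
        qed
        show "((\<lambda>y. (T h y - T h z0) / (y - z0)) \<circ> X) \<longlonglongrightarrow> integral\<^sup>L lebesgue Dg"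
          using conv by (simp add: o_def quot)
      qed
    qed
  qed
  show ?thesis
    by (subst holomorphic_on_open) (use der in auto)
qed

end

lemma cont_van_bdd:
  fixes g :: "complex \<Rightarrow> real"
  assumes "continuous_on UNIV g" "(g \<longlongrightarrow> 0) at_infinity"
  shows "\<exists>M\<ge>0. \<forall>z. \<bar>g z\<bar> \<le> M"
proof -
  have "eventually (\<lambda>z. dist (g z) 0 < 1) at_infinity" using assms(2) by (rule tendstoD) simp
  then obtain R where R: "\<And>z. R \<le> norm z \<Longrightarrow> \<bar>g z\<bar> < 1"
    unfolding eventually_at_infinity by auto
  have "compact (g ` cball 0 \<bar>R\<bar>)"
    by (rule compact_continuous_image[OF continuous_on_subset[OF assms(1)]]) auto
  then obtain M' where M': "\<And>x. x \<in> g ` cball 0 \<bar>R\<bar> \<Longrightarrow> norm x \<le> M'"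
    using compact_imp_bounded bounded_iff by metis
  have "\<bar>g z\<bar> \<le> max 1 M'" for z
  proof (cases "R \<le> norm z")
    case True then show ?thesis using R[of z] by simp
  next
    case False then have "z \<in> cball 0 \<bar>R\<bar>" by auto
    then show ?thesis using M'[of "g z"] by (simp add: le_max_iff_disj)
  qed
  then show ?thesis by (intro exI[of _ "max 1 M'"]) auto
qed

lemma tail_lemma:
  fixes f :: "complex \<Rightarrow> real"
  assumes "integrable lebesgue f"
  shows "(\<lambda>n. \<integral>w. (if real n < cmod w then 1 else 0) * f w \<partial>lebesgue) \<longlonglongrightarrow> 0"
proof -
  have fm[measurable]: "f \<in> borel_measurable lebesgue" using borel_measurable_integrable[OF assms] .
  have idm[measurable]: "(\<lambda>x::complex. x) \<in> borel_measurable lebesgue" by (rule cont_meas) (rule continuous_on_id)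
  have m: "(\<lambda>w. (if real n < cmod w then 1 else 0) * f w) \<in> borel_measurable lebesgue" for n :: nat
    by measurable
  have "(\<lambda>n. \<integral>w. (if real n < cmod w then 1 else 0) * f w \<partial>lebesgue) \<longlonglongrightarrow> integral\<^sup>L lebesgue (\<lambda>w::complex. 0::real)"
  proof (rule integral_dominated_convergence[where w="\<lambda>w. norm (f w)"])
    show "(\<lambda>w::complex. 0::real) \<in> borel_measurable lebesgue" by simp
    show "integrable lebesgue (\<lambda>w. norm (f w))" using assms by simp
    show "AE w in lebesgue. (\<lambda>n. (if real n < cmod w then 1 else 0) * f w) \<longlonglongrightarrow> 0"
    proof (intro AE_I2)
      fix w :: complex
      have "eventually (\<lambda>n. (if real n < cmod w then 1 else 0) * f w = 0) sequentially"
        unfolding eventually_sequentially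
        by (intro exI[of _ "nat \<lceil>cmod w\<rceil>"] allI impI) (auto dest!: real_nat_ceiling_ge[THEN order_trans] simp: not_less)
      then show "(\<lambda>n. (if real n < cmod w then 1 else 0) * f w) \<longlonglongrightarrow> 0"
        by (rule tendsto_eventually)
    qed
  qed (use m in auto)
  then show ?thesis by simp
qed

context fock begin

lemma T_maps:
  assumes H: "\<forall>t>0. in_C0 (N t)" and M: "\<And>z. enn2real (N 1 z) \<le> M"
    and f: "f \<in> fock_inf \<alpha>"
  shows "T f \<in> fock_inf \<alpha>"
    and "cmod (T f z) * exp (-\<alpha>*(cmod z)^2/2) \<le> fock_inf_norm \<alpha> f * M"
proof -
  have hh: "f holomorphic_on UNIV" using f unfolding fock_inf_def by simp
  have hc: "continuous_on UNIV f" by (rule holomorphic_on_imp_continuous_on[OF hh])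
  have hb: "\<And>w. cmod (f w) * exp (-\<alpha>*(cmod w)^2/2) \<le> fock_inf_norm \<alpha> f"
    using fock_le_norm[OF f] by simp
  have nf: "0 \<le> fock_inf_norm \<alpha> f" by (rule fock_norm_nonneg[OF f])
  have est: "cmod (T f z) * exp (-\<alpha>*(cmod z)^2/2) \<le> fock_inf_norm \<alpha> f * M" for z
  proof -
    have "cmod (T f z) * exp (-\<alpha>*(cmod z)^2/2) \<le>
      (\<integral>w. (\<alpha>/pi) * \<phi> w * (cmod (f w) * exp (-\<alpha>*(cmod w)^2/2)) * exp (-\<alpha>*(cmod (z - w))^2/2) \<partial>lebesgue)"
      by (rule T_est[OF H hc hb])
    also have "\<dots> \<le> (\<integral>w. fock_inf_norm \<alpha> f * ((\<alpha>/pi) * \<phi> w * exp (-\<alpha>*1*(cmod (z - w))^2/2)) \<partial>lebesgue)"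
    proof (rule integral_mono)
      show "integrable lebesgue (\<lambda>w. (\<alpha>/pi) * \<phi> w * (cmod (f w) * exp (-\<alpha>*(cmod w)^2/2)) * exp (-\<alpha>*(cmod (z - w))^2/2))"
        by (rule Q_int[OF H hc hb])
      show "integrable lebesgue (\<lambda>w. fock_inf_norm \<alpha> f * ((\<alpha>/pi) * \<phi> w * exp (-\<alpha>*1*(cmod (z - w))^2/2)))"
        by (intro integrable_mult_right N1_fin_int[OF H]) simp
      fix w
      have p: "0 \<le> (\<alpha>/pi) * \<phi> w * exp (-\<alpha>*(cmod (z - w))^2/2)" using apos nonneg[of w] by simp
      have "(\<alpha>/pi) * \<phi> w * (cmod (f w) * exp (-\<alpha>*(cmod w)^2/2)) * exp (-\<alpha>*(cmod (z - w))^2/2)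
          = (cmod (f w) * exp (-\<alpha>*(cmod w)^2/2)) * ((\<alpha>/pi) * \<phi> w * exp (-\<alpha>*(cmod (z - w))^2/2))"
        by (simp add: mult_ac)
      also have "\<dots> \<le> fock_inf_norm \<alpha> f * ((\<alpha>/pi) * \<phi> w * exp (-\<alpha>*(cmod (z - w))^2/2))"
        by (rule mult_right_mono[OF hb p])
      finally show "(\<alpha>/pi) * \<phi> w * (cmod (f w) * exp (-\<alpha>*(cmod w)^2/2)) * exp (-\<alpha>*(cmod (z - w))^2/2)
          \<le> fock_inf_norm \<alpha> f * ((\<alpha>/pi) * \<phi> w * exp (-\<alpha>*1*(cmod (z - w))^2/2))" by simp
    qed
    also have "\<dots> = fock_inf_norm \<alpha> f * enn2real (N 1 z)"
      using N_int(2)[of 1 z] H by (simp add: in_C0_def)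
    also have "\<dots> \<le> fock_inf_norm \<alpha> f * M" by (rule mult_left_mono[OF M nf])
    finally show ?thesis .
  qed
  show "cmod (T f z) * exp (-\<alpha>*(cmod z)^2/2) \<le> fock_inf_norm \<alpha> f * M" by (rule est)
  show "T f \<in> fock_inf \<alpha>"
    by (rule fock_infI[OF T_holo[OF H hh hb]]) (use est in simp)
qed

end

lemma grow_conv:
  assumes "cmod (h w) \<le> K * exp (\<alpha>*(cmod w)^2/2)"
  shows "cmod (h w) * exp (-\<alpha>*(cmod w)^2/2) \<le> K"
proof -
  have "cmod (h w) * exp (-\<alpha>*(cmod w)^2/2) \<le> K * exp (\<alpha>*(cmod w)^2/2) * exp (-\<alpha>*(cmod w)^2/2)"
    by (rule mult_right_mono[OF assms]) simp
  also have "\<dots> = K" by (simp add: mult.assoc mult_exp_exp)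
  finally show ?thesis .
qed

context fock begin

lemma part_B:
  assumes H: "\<forall>t>0. in_C0 (N t)"
  shows "compact_on_fock_inf \<alpha> T"
proof -
  have HC: "in_C0 (N 1)" using H by simp
  obtain M' where M': "\<And>z. \<bar>enn2real (N 1 z)\<bar> \<le> M'"
    using cont_van_bdd[of "\<lambda>z. enn2real (N 1 z)"] HC unfolding in_C0_def by blast
  define M where "M = max M' 0"
  have M0: "M \<ge> 0" and M: "\<And>z. enn2real (N 1 z) \<le> M"
    unfolding M_def using M' by (auto simp: le_max_iff_disj)
  have N1v: "((\<lambda>z. enn2real (N 1 z)) \<longlongrightarrow> 0) at_infinity" using HC unfolding in_C0_def by blast
  have N1i: "integrable lebesgue (\<lambda>w. (\<alpha>/pi) * \<phi> w * exp (-\<alpha>*1*(cmod (z - w))^2/2))" for z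
    by (rule N1_fin_int[OF H]) simp
  have N1e: "enn2real (N 1 z) = (\<integral>w. (\<alpha>/pi) * \<phi> w * exp (-\<alpha>*1*(cmod (z - w))^2/2) \<partial>lebesgue)" for z
    by (rule N_int(2)) (use H in \<open>simp add: in_C0_def\<close>)
  have idm[measurable]: "(\<lambda>x::complex. x) \<in> borel_measurable lebesgue" by (rule cont_meas) (rule continuous_on_id)
  show ?thesis unfolding compact_on_fock_inf_def
  proof (intro conjI ballI allI impI)
    fix f assume "f \<in> fock_inf \<alpha>"
    then show "T f \<in> fock_inf \<alpha>" by (rule T_maps(1)[OF H M])
  next
    fix fs :: "nat \<Rightarrow> complex \<Rightarrow> complex"
    assume fsf: "\<forall>n. fs n \<in> fock_inf \<alpha>" and bd: "bdd_above (range (\<lambda>n. fock_inf_norm \<alpha> (fs n)))"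
    obtain Nf where Nf: "\<And>n. fock_inf_norm \<alpha> (fs n) \<le> Nf" using bd by (auto simp: bdd_above_def)
    have Nf0: "0 \<le> Nf" using fock_norm_nonneg[of "fs 0" \<alpha>] fsf Nf[of 0] by auto
    have gr: "cmod (fs n w) \<le> Nf * exp (\<alpha>*(cmod w)^2/2)" for n w
      using fock_le_norm'[of "fs n" \<alpha> w] fsf Nf[of n] by (meson exp_ge_zero mult_right_mono order_trans)
    have fsh: "fs n holomorphic_on UNIV" for n using fsf unfolding fock_inf_def by simp
    define \<H> where "\<H> = {h. h holomorphic_on UNIV \<and> (\<forall>w. cmod (h w) \<le> Nf * exp (\<alpha>*(cmod w)^2/2))}"
    obtain g r where gh: "g holomorphic_on UNIV" and r: "strict_mono (r :: nat \<Rightarrow> nat)"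
      and pw: "\<And>x. (\<lambda>n. fs (r n) x) \<longlonglongrightarrow> g x"
      and ul: "\<And>K. compact K \<Longrightarrow> uniform_limit K (fs \<circ> r) g sequentially"
    proof (rule Montel[of UNIV \<H> fs])
      show "open (UNIV :: complex set)" by simp
      show "\<And>h. h \<in> \<H> \<Longrightarrow> h holomorphic_on UNIV" unfolding \<H>_def by simp
      show "range fs \<subseteq> \<H>" unfolding \<H>_def using fsh gr by auto
      fix K :: "complex set" assume "compact K" "K \<subseteq> UNIV"
      then obtain Rk where Rk: "\<And>z. z \<in> K \<Longrightarrow> norm z \<le> Rk" using compact_imp_bounded bounded_iff by metis
      show "\<exists>B. \<forall>h\<in>\<H>. \<forall>z\<in>K. norm (h z) \<le> B"
      proof (intro exI ballI)
        fix h z assume "h \<in> \<H>" "z \<in> K"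
        then have "norm (h z) \<le> Nf * exp (\<alpha>*(cmod z)^2/2)" unfolding \<H>_def by simp
        also have "\<dots> \<le> Nf * exp (\<alpha>*Rk^2/2)"
        proof -
          have "(cmod z)^2 \<le> Rk^2" by (rule power_mono[OF Rk[OF \<open>z \<in> K\<close>]]) simp
          then show ?thesis using apos Nf0 by (intro mult_left_mono) auto
        qed
        finally show "norm (h z) \<le> Nf * exp (\<alpha>*Rk^2/2)" .
      qed
    qed auto
    have gb: "cmod (g w) \<le> Nf * exp (\<alpha>*(cmod w)^2/2)" for w
      by (rule LIMSEQ_le_const2[OF tendsto_norm[OF pw[of w]]]) (use gr in auto)
    have gf: "g \<in> fock_inf \<alpha>"
      by (rule fock_infI[OF gh]) (rule grow_conv[OF gb])
    have gc: "continuous_on UNIV g" by (rule holomorphic_on_imp_continuous_on[OF gh])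
    have fsc: "continuous_on UNIV (fs n)" for n by (rule holomorphic_on_imp_continuous_on[OF fsh])
    have fsb: "\<And>w. cmod (fs m w) * exp (-\<alpha>*(cmod w)^2/2) \<le> Nf" for m
      by (rule grow_conv[OF gr])
    have gbb: "\<And>w. cmod (g w) * exp (-\<alpha>*(cmod w)^2/2) \<le> Nf"
      by (rule grow_conv[OF gb])
    define hn where "hn n w = fs (r n) w - g w" for n w
    have hnc: "continuous_on UNIV (hn n)" for n unfolding hn_def by (intro continuous_intros fsc gc)
    have hnb: "cmod (hn n w) * exp (-\<alpha>*(cmod w)^2/2) \<le> 2*Nf" for n w
    proof -
      have "cmod (hn n w) \<le> cmod (fs (r n) w) + cmod (g w)" unfolding hn_def by (rule norm_triangle_ineq4)
      also have "\<dots> \<le> (2*Nf) * exp (\<alpha>*(cmod w)^2/2)" using gr[of "r n" w] gb[of w] by simp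
      finally show ?thesis by (rule grow_conv)
    qed
    have eqT: "T (fs (r n)) z - T g z = T (hn n) z" for n z
    proof -
      have "T (fs (r n)) z - T g z = integral\<^sup>L lebesgue (\<lambda>w. Ig (fs (r n)) z w - Ig g z w)"
        unfolding T_Ig
        by (rule Bochner_Integration.integral_diff[symmetric])
           (rule Ig_int[OF H fsc fsb], rule Ig_int[OF H gc gbb])
      also have "\<dots> = T (hn n) z"
        unfolding T_Ig Ig_def hn_def by (simp add: algebra_simps)
      finally show ?thesis .
    qed
    show "\<exists>r g. strict_mono r \<and> g \<in> fock_inf \<alpha> \<and> (\<lambda>n. fock_inf_norm \<alpha> (\<lambda>z. T (fs (r n)) z - g z)) \<longlonglongrightarrow> 0"
    proof (intro exI conjI)
      show "strict_mono r" by (rule r)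
      show "T g \<in> fock_inf \<alpha>" by (rule T_maps(1)[OF H M gf])
      show "(\<lambda>n. fock_inf_norm \<alpha> (\<lambda>z. T (fs (r n)) z - T g z)) \<longlonglongrightarrow> 0"
      proof (rule LIMSEQ_I)
        fix e :: real assume e: "0 < e"
        define \<delta> where "\<delta> = e / (8*(Nf+1))"
        define \<eta> where "\<eta> = e / (4*(M+1))"
        have \<delta>0: "\<delta> > 0" and \<eta>0: "\<eta> > 0" unfolding \<delta>_def \<eta>_def using e Nf0 M0 by auto
        obtain S0 where S0: "\<And>z. S0 \<le> norm z \<Longrightarrow> dist (enn2real (N 1 z)) 0 < \<delta>"
          using tendstoD[OF N1v \<delta>0] unfolding eventually_at_infinity by blast
        define S where "S = max S0 0"
        have S: "\<And>z. S \<le> cmod z \<Longrightarrow> enn2real (N 1 z) < \<delta>" and Sn: "S \<ge> 0"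
          unfolding S_def using S0 by (auto simp: dist_real_def)
        define ft where "ft w = (\<alpha>/pi) * \<phi> w * exp (-\<alpha>*(1/4)*(cmod (0 - w))^2/2)" for w
        have ift: "integrable lebesgue ft" unfolding ft_def[abs_def] by (rule N1_fin_int[OF H]) simp
        have ftm[measurable]: "ft \<in> borel_measurable lebesgue" by (rule borel_measurable_integrable[OF ift])
        obtain n1 where n1: "\<And>n. n \<ge> n1 \<Longrightarrow> norm ((\<integral>w. (if real n < cmod w then 1 else 0) * ft w \<partial>lebesgue) - 0) < \<delta>"
          using LIMSEQ_D[OF tail_lemma[OF ift] \<delta>0] by blast
        define nR where "nR = n1 + nat \<lceil>2*S\<rceil>"
        define R where "R = real nR"
        have R2S: "2*S \<le> R" unfolding R_def nR_def by linarith
        have tail0: "(\<integral>w. (if R < cmod w then 1 else 0) * ft w \<partial>lebesgue) < \<delta>"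
          using n1[of nR] unfolding R_def nR_def by simp
        define ti where "ti z w = (if R < cmod w then 1 else 0) * ((\<alpha>/pi) * \<phi> w * exp (-\<alpha>*1*(cmod (z - w))^2/2))" for z w
        have n1m[measurable]: "(\<lambda>w. (\<alpha>/pi) * \<phi> w * exp (-\<alpha>*1*(cmod (z - w))^2/2)) \<in> borel_measurable lebesgue" for z
          by (rule borel_measurable_integrable[OF N1i])
        have iti: "integrable lebesgue (ti z)" for z
        proof (rule Bochner_Integration.integrable_bound[OF N1i[of z]])
          show "ti z \<in> borel_measurable lebesgue" unfolding ti_def[abs_def] by measurable
          show "AE w in lebesgue. norm (ti z w) \<le> norm ((\<alpha>/pi) * \<phi> w * exp (-\<alpha>*1*(cmod (z - w))^2/2))"
            unfolding ti_def by (intro AE_I2) simp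
        qed
        have ift2: "integrable lebesgue (\<lambda>w. (if R < cmod w then 1 else 0) * ft w)"
        proof (rule Bochner_Integration.integrable_bound[OF ift])
          show "(\<lambda>w. (if R < cmod w then 1 else 0) * ft w) \<in> borel_measurable lebesgue" by measurable
          show "AE w in lebesgue. norm ((if R < cmod w then 1 else 0) * ft w) \<le> norm (ft w)"
            by (intro AE_I2) simp
        qed
        have tailB: "integral\<^sup>L lebesgue (ti z) \<le> \<delta>" for z
        proof (cases "S \<le> cmod z")
          case True
          have "integral\<^sup>L lebesgue (ti z) \<le> (\<integral>w. (\<alpha>/pi) * \<phi> w * exp (-\<alpha>*1*(cmod (z - w))^2/2) \<partial>lebesgue)"
            by (rule integral_mono[OF iti N1i]) (use apos nonneg in \<open>simp add: ti_def\<close>)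
          also have "\<dots> = enn2real (N 1 z)" by (rule N1e[symmetric])
          also have "\<dots> < \<delta>" by (rule S[OF True])
          finally show ?thesis by simp
        next
          case False
          have "integral\<^sup>L lebesgue (ti z) \<le> (\<integral>w. (if R < cmod w then 1 else 0) * ft w \<partial>lebesgue)"
          proof (rule integral_mono[OF iti ift2])
            fix w
            show "ti z w \<le> (if R < cmod w then 1 else 0) * ft w"
            proof (cases "R < cmod w")
              case True
              have "cmod w \<le> cmod (z - w) + cmod z" using norm_triangle_ineq4[of z "z - w"] by simp
              then have "cmod w / 2 \<le> cmod (z - w)" using False True R2S by simp
              then have "(cmod w / 2)^2 \<le> (cmod (z - w))^2" by (rule power_mono) simp
              then have "\<alpha>*(1/4)*(cmod (0 - w))^2/2 \<le> \<alpha>*1*(cmod (z - w))^2/2"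
                using apos by (simp add: power_divide field_simps)
              then have ee: "exp (-\<alpha>*1*(cmod (z - w))^2/2) \<le> exp (-\<alpha>*(1/4)*(cmod (0 - w))^2/2)" by simp
              have p0: "0 \<le> (\<alpha>/pi) * \<phi> w" using apos nonneg[of w] by simp
              have "(\<alpha>/pi) * \<phi> w * exp (-\<alpha>*1*(cmod (z - w))^2/2) \<le> (\<alpha>/pi) * \<phi> w * exp (-\<alpha>*(1/4)*(cmod (0 - w))^2/2)"
                by (rule mult_left_mono[OF ee p0])
              then show ?thesis unfolding ti_def ft_def using True by (simp only: if_True mult_1_left)
            qed (simp add: ti_def)
          qed
          also have "\<dots> < \<delta>" by (rule tail0)
          finally show ?thesis by simp
        qed
        have "eventually (\<lambda>n. \<forall>x\<in>cball 0 R. dist ((fs \<circ> r) n x) (g x) < \<eta>) sequentially"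
          using ul[of "cball 0 R"] \<eta>0 unfolding uniform_limit_iff by simp
        then obtain n2 where n2: "\<And>n x. n \<ge> n2 \<Longrightarrow> x \<in> cball 0 R \<Longrightarrow> dist (fs (r n) x) (g x) < \<eta>"
          unfolding eventually_sequentially o_def by blast
        show "\<exists>no. \<forall>n\<ge>no. norm (fock_inf_norm \<alpha> (\<lambda>z. T (fs (r n)) z - T g z) - 0) < e"
        proof (intro exI allI impI)
          fix n assume nn: "n \<ge> n2"
          have Xb: "cmod (hn n w) * exp (-\<alpha>*(cmod w)^2/2) \<le> \<eta> + 2*Nf * (if R < cmod w then 1 else 0)" for w
          proof (cases "R < cmod w")
            case True then show ?thesis using hnb[of n w] \<eta>0 by simp
          next
            case False
            then have "w \<in> cball 0 R" by simp
            then have "cmod (hn n w) < \<eta>" using n2[OF nn] unfolding hn_def dist_norm by simp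
            moreover have "exp (-\<alpha>*(cmod w)^2/2) \<le> 1" using apos by simp
            ultimately have "cmod (hn n w) * exp (-\<alpha>*(cmod w)^2/2) \<le> \<eta> * 1"
              using \<eta>0 by (intro mult_mono) auto
            then show ?thesis using False by simp
          qed
          have pz: "cmod (T (hn n) z) * exp (-\<alpha>*(cmod z)^2/2) \<le> e/2" for z
          proof -
            have "cmod (T (hn n) z) * exp (-\<alpha>*(cmod z)^2/2) \<le>
              (\<integral>w. (\<alpha>/pi) * \<phi> w * (cmod (hn n w) * exp (-\<alpha>*(cmod w)^2/2)) * exp (-\<alpha>*(cmod (z - w))^2/2) \<partial>lebesgue)"
              by (rule T_est[OF H hnc hnb])
            also have "\<dots> \<le> (\<integral>w. \<eta> * ((\<alpha>/pi) * \<phi> w * exp (-\<alpha>*1*(cmod (z - w))^2/2)) + 2*Nf * ti z w \<partial>lebesgue)"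
            proof (rule integral_mono)
              show "integrable lebesgue (\<lambda>w. (\<alpha>/pi) * \<phi> w * (cmod (hn n w) * exp (-\<alpha>*(cmod w)^2/2)) * exp (-\<alpha>*(cmod (z - w))^2/2))"
                by (rule Q_int[OF H hnc hnb])
              show "integrable lebesgue (\<lambda>w. \<eta> * ((\<alpha>/pi) * \<phi> w * exp (-\<alpha>*1*(cmod (z - w))^2/2)) + 2*Nf * ti z w)"
                by (intro Bochner_Integration.integrable_add integrable_mult_right N1i iti)
              fix w
              have p: "0 \<le> (\<alpha>/pi) * \<phi> w * exp (-\<alpha>*(cmod (z - w))^2/2)" using apos nonneg[of w] by simp
              have "(\<alpha>/pi) * \<phi> w * (cmod (hn n w) * exp (-\<alpha>*(cmod w)^2/2)) * exp (-\<alpha>*(cmod (z - w))^2/2)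
                 = (cmod (hn n w) * exp (-\<alpha>*(cmod w)^2/2)) * ((\<alpha>/pi) * \<phi> w * exp (-\<alpha>*(cmod (z - w))^2/2))"
                by (simp add: mult_ac)
              also have "\<dots> \<le> (\<eta> + 2*Nf * (if R < cmod w then 1 else 0)) * ((\<alpha>/pi) * \<phi> w * exp (-\<alpha>*(cmod (z - w))^2/2))"
                by (rule mult_right_mono[OF Xb p])
              also have "\<dots> = \<eta> * ((\<alpha>/pi) * \<phi> w * exp (-\<alpha>*1*(cmod (z - w))^2/2)) + 2*Nf * ti z w"
                unfolding ti_def by (simp add: algebra_simps add_divide_distrib)
              finally show "(\<alpha>/pi) * \<phi> w * (cmod (hn n w) * exp (-\<alpha>*(cmod w)^2/2)) * exp (-\<alpha>*(cmod (z - w))^2/2)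
                 \<le> \<eta> * ((\<alpha>/pi) * \<phi> w * exp (-\<alpha>*1*(cmod (z - w))^2/2)) + 2*Nf * ti z w" .
            qed
            also have "\<dots> = \<eta> * enn2real (N 1 z) + 2*Nf * integral\<^sup>L lebesgue (ti z)"
              unfolding N1e by (subst Bochner_Integration.integral_add[OF integrable_mult_right[OF N1i] integrable_mult_right[OF iti]]) (simp only: integral_mult_right_zero)
            also have "\<dots> \<le> \<eta> * M + 2*Nf * \<delta>"
              using \<eta>0 Nf0 by (intro add_mono mult_left_mono M tailB) auto
            also have "\<dots> \<le> e/4 + e/4"
            proof (intro add_mono)
              show "\<eta> * M \<le> e/4" unfolding \<eta>_def using e M0 by (simp add: field_simps)
              show "2*Nf * \<delta> \<le> e/4" unfolding \<delta>_def using e Nf0 by (simp add: field_simps)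
            qed
            finally show ?thesis by simp
          qed
          have "(\<lambda>z. T (fs (r n)) z - T g z) = T (hn n)" using eqT by auto
          moreover have "fock_inf_norm \<alpha> (T (hn n)) \<le> e/2" by (rule fock_norm_le[OF pz])
          moreover have "0 \<le> fock_inf_norm \<alpha> (T (hn n))"
          proof -
            have "hn n \<in> fock_inf \<alpha>" unfolding hn_def using fsf gf by (intro fock_diff) auto
            then show ?thesis by (intro fock_norm_nonneg T_maps(1)[OF H M])
          qed
          ultimately show "norm (fock_inf_norm \<alpha> (\<lambda>z. T (fs (r n)) z - T g z) - 0) < e"
            using e by simp
        qed
      qed
    qed
  qed
qed

end

theorem theorem4p4:
  fixes \<alpha> :: real and \<phi> :: "complex \<Rightarrow> real"
  assumes "\<alpha> > 0"
    and "\<phi> \<in> borel_measurable lebesgue"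
    and "\<And>w. \<phi> w \<ge> 0"
    and "cond_I1 \<alpha> \<phi>"
  shows "compact_on_fock_inf \<alpha> (toeplitz \<alpha> \<phi>) \<longleftrightarrow>
         (\<forall>t>0. in_C0 (heat_transform \<alpha> \<phi> t))"
proof -
  interpret fock \<alpha> \<phi> using assms by unfold_locales
  show ?thesis using part_A part_B by blast
qed

end
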